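(* Let $\mathcal{X}$ and $\mathcal{Z}$ be Euclidean spaces. Let $\mathfrak{S}:\mathcal{X}\to\mathcal{Z}$ be a differentiable mapping such that $\mathfrak{S}$ and its G\^ateaux derivative $\mathrm{D}\mathfrak{S}$ are Lipschitz continuous; let $g:\mathcal{Z}\to\mathbb{R}$ be Lipschitz continuous and $\eta$-weakly convex for some $\eta>0$; let $C\subset\mathcal{X}$ be a nonempty closed prox-regular set; set $F:=g\circ\mathfrak{S}$ and assume $\mathop{\mathrm{argmin}}_{x\in C}F(x)\neq\emptyset$. Choose $x_1\in C$, $c\in(0,1/2)$, $\rho\in(0,1)$, $\tilde\gamma>0$ and $\alpha\ge1$, and let $(x_n)_{n\ge1}\subset C$ and $(\gamma_n)_{n\ge1}$ be generated by the following projected variable smoothing algorithm: for $n=1,2,\dots$, set $\mu_n:=(2\eta)^{-1}n^{-1/\alpha}$ and $F_n:={}^{\mu_n}g\circ\mathfrak{S}$; then for $m=0,1,2,\dots$, pick some $x\in P_C\big(x_n-\rho^m\tilde\gamma\nabla F_n(x_n)\big)$, and if $F_n(x)\le F_n(x_n)-c\rho^m\tilde\gamma\big\|\frac{x_n-x}{\rho^m\tilde\gamma}\big\|^2$ holds, set $x_{n+1}:=x$, $\gamma_n:=\rho^m\tilde\gamma$ and stop the inner loop. Then: (a) $\liminf_{n\to\infty}\mathcal{M}_{\gamma_n}^{F_n,\iota_C}(x_n)=0$; (b) for any subsequence $(x_{m(l)})_{l\ge1}$ of $(x_n)$, with $m:\mathbb{N}\to\mathbb{N}$ monotonically increasing,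 such that $\lim_{l\to\infty}\mathcal{M}_{\gamma_{m(l)}}^{F_{m(l)},\iota_C}(x_{m(l)})=0$, every cluster point $x^\star\in C$ of $(x_{m(l)})_{l\ge1}$ satisfies $0\in\partial_F(F+\iota_C)(x^\star)$, i.e. is a stationary point of minimizing $F$ over $C$.
   Context: Prox-regularity of $C$: the metric projection $P_C(\bar x):=\mathop{\mathrm{argmin}}_{x\in C}\|\bar x-x\|$ (nonempty for every $\bar x$ since $C$ is closed) is single-valued on some open subset of $\mathcal{X}$ containing $C$. $\iota_C$ is the indicator function of $C$ ($0$ on $C$, $+\infty$ elsewhere). For a proper $J:\mathcal{X}\to\mathbb{R}\cup\{+\infty\}$, the Fr\'echet subdifferential $\partial_F J(\bar x)$ at $\bar x\in\mathrm{dom}\,J$ is the set of $v$ with $\sup_{\epsilon>0}\inf_{0<\|x-\bar x\|<\epsilon}\frac{J(x)-J(\bar x)-\langle v,x-\bar x\rangle}{\|x-\bar x\|}\ge0$ (empty if $\bar x\notin\mathrm{dom}\,J$); for continuously differentiable $J$ it equals $\{\nabla J(\bar x)\}$. For $\mu\in(0,\eta^{-1})$, $\mathrm{prox}_{\mu g}(\bar z):=\mathop{\mathrm{argmin}}_{z\in\mathcal{Z}}\big(g(z)+\frac{1}{2\mu}\|z-\bar z\|^2\big)$ is single-valued and the Moreau envelope ${}^{\mu}g(\bar z):=g(\mathrm{prox}_{\mu g}(\bar z))+\frac{1}{2\mu}\|\mathrm{prox}_{\mu g}(\bar z)-\bar z\|^2$ is continuously differentiable with $\nabla{}^{\mu}g(\bar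 z)=\mu^{-1}(\bar z-\mathrm{prox}_{\mu g}(\bar z))$. For a function $J:\mathcal{X}\to\mathbb{R}$, $\gamma>0$ and $\bar x\in\mathcal{X}$, $\mathcal{M}_{\gamma}^{J,\iota_C}(\bar x):=\mathrm{dist}\big(0,\{(\bar x-p)/\gamma : p\in P_C(\bar x-\gamma v),\ v\in\partial_F J(\bar x)\}\big)$, with $\mathrm{dist}(0,S)=\inf_{s\in S}\|s\|$. *)

theory Defs
  imports "HOL-Analysis.Analysis"
begin

definition proj :: "'a::real_normed_vector set \<Rightarrow> 'a \<Rightarrow> 'a set" where
  "proj C x = {p \<in> C. \<forall>q\<in>C. norm (x - p) \<le> norm (x - q)}"

definition prox_regular :: "'a::real_normed_vector set \<Rightarrow> bool" where
  "prox_regular C \<longleftrightarrow> (\<exists>U. open U \<and> C \<subseteq> U \<and> (\<forall>x\<in>U. \<exists>!p. p \<in> proj C x))"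

definition weakly_convex :: "real \<Rightarrow> ('a::real_normed_vector \<Rightarrow> real) \<Rightarrow> bool" where
  "weakly_convex \<eta> g \<longleftrightarrow> convex_on UNIV (\<lambda>z. g z + \<eta> / 2 * (norm z)\<^sup>2)"

definition prox :: "real \<Rightarrow> ('a::real_normed_vector \<Rightarrow> real) \<Rightarrow> 'a \<Rightarrow> 'a" where
  "prox \<mu> g z = (THE p. \<forall>q. g p + 1 / (2 * \<mu>) * (norm (p - z))\<^sup>2
                              \<le> g q + 1 / (2 * \<mu>) * (norm (q - z))\<^sup>2)"

definition moreau_env :: "real \<Rightarrow> ('a::real_normed_vector \<Rightarrow> real) \<Rightarrow> 'a \<Rightarrow> real" where
  "moreau_env \<mu> g z = g (prox \<mu> g z) + 1 / (2 * \<mu>) * (norm (prox \<mu> g z - z))\<^sup>2"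

definition grad :: "('a::real_inner \<Rightarrow> real) \<Rightarrow> 'a \<Rightarrow> 'a" where
  "grad f x = (THE v. (f has_derivative (\<lambda>h. v \<bullet> h)) (at x))"

definition frechet_subdiff :: "('a::real_inner \<Rightarrow> ereal) \<Rightarrow> 'a \<Rightarrow> 'a set" where
  "frechet_subdiff J xb = {v. J xb < \<infinity> \<and>
     (SUP \<epsilon>\<in>{0<..}. INF x\<in>{x. 0 < norm (x - xb) \<and> norm (x - xb) < \<epsilon>}.
        (J x - J xb - ereal (v \<bullet> (x - xb))) / ereal (norm (x - xb))) \<ge> 0}"

definition stat_measure :: "real \<Rightarrow> ('a::real_inner \<Rightarrow> real) \<Rightarrow> 'a set \<Rightarrow> 'a \<Rightarrow> real" where
  "stat_measure \<gamma> J C xb = infdist 0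
     {(1 / \<gamma>) *\<^sub>R (xb - p) | p v. v \<in> frechet_subdiff (\<lambda>x. ereal (J x)) xb \<and>
                                  p \<in> proj C (xb - \<gamma> *\<^sub>R v)}"

end

theory Submission
  imports Defs
begin

lemma nsq_diff: "(norm (a - b))\<^sup>2 = (norm a)\<^sup>2 - 2*(a \<bullet> b) + (norm (b::'a::real_inner))\<^sup>2"
  by (simp only: power2_norm_eq_inner) (simp add: inner_diff_left inner_diff_right inner_commute)

lemma nsq_add: "(norm (a + b))\<^sup>2 = (norm a)\<^sup>2 + 2*(a \<bullet> b) + (norm (b::'a::real_inner))\<^sup>2"
  by (simp only: power2_norm_eq_inner) (simp add: inner_add_left inner_add_right inner_commute)

lemma proj_ineq:
  fixes C :: "'a::real_inner set"
  assumes "p \<in> proj C y" "q \<in> C"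
  shows "2 * ((y - p) \<bullet> (q - p)) \<le> (norm (q - p))\<^sup>2"
proof -
  have "norm (y - p) \<le> norm (y - q)" using assms unfolding proj_def by auto
  hence "(norm (y - p))\<^sup>2 \<le> (norm (y - q))\<^sup>2" by (simp add: power_mono)
  moreover have "(norm (y - q))\<^sup>2 = (norm (y - p))\<^sup>2 - 2 * ((y - p) \<bullet> (q - p)) + (norm (q - p))\<^sup>2"
    using nsq_diff[of "y - p" "q - p"] by simp
  ultimately show ?thesis by linarith
qed

lemma proj_nonempty:
  fixes C :: "'a::euclidean_space set"
  assumes "closed C" "C \<noteq> {}"
  shows "\<exists>p. p \<in> proj C y"
proof -
  obtain x where "x \<in> C" "\<And>z. z \<in> C \<Longrightarrow> dist y x \<le> dist y z"
    using distance_attains_inf[OF assms] by blast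
  then show ?thesis unfolding proj_def by (auto simp: dist_norm)
qed

lemma proj_in: "p \<in> proj C y \<Longrightarrow> p \<in> C" unfolding proj_def by auto

lemma proj_segment:
  fixes C :: "'a::real_normed_vector set"
  assumes "p \<in> proj C y" "0 \<le> t" "t \<le> 1"
  shows "p \<in> proj C (p + t *\<^sub>R (y - p))"
proof -
  have pC: "p \<in> C" using assms(1) by (rule proj_in)
  { fix q assume q: "q \<in> C"
    have "norm (y - p) \<le> norm (y - q)" using assms(1) q unfolding proj_def by auto
    have e1: "y - (p + t *\<^sub>R (y - p)) = (1 - t) *\<^sub>R (y - p)" by (simp add: algebra_simps)
    have "norm (y - q) \<le> norm (y - (p + t *\<^sub>R (y - p))) + norm ((p + t *\<^sub>R (y - p)) - q)"
      using norm_triangle_ineq[of "y - (p + t *\<^sub>R (y - p))" "(p + t *\<^sub>R (y - p)) - q"] by simp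
    also have "norm (y - (p + t *\<^sub>R (y - p))) = (1 - t) * norm (y - p)"
      using e1 assms by simp
    finally have "t * norm (y - p) \<le> norm ((p + t *\<^sub>R (y - p)) - q)"
      using \<open>norm (y - p) \<le> norm (y - q)\<close> by (simp add: algebra_simps)
    moreover have "norm ((p + t *\<^sub>R (y - p)) - p) = t * norm (y - p)" using assms by simp
    ultimately have "norm ((p + t *\<^sub>R (y - p)) - p) \<le> norm ((p + t *\<^sub>R (y - p)) - q)" using assms by (simp add: abs_of_nonneg) }
  then show ?thesis using pC unfolding proj_def by auto
qed

definition pj :: "'a::real_normed_vector set \<Rightarrow> 'a \<Rightarrow> 'a" where
  "pj C y = (SOME p. p \<in> proj C y)"

lemma pj_in:
  fixes C :: "'a::euclidean_space set"
  assumes "closed C" "C \<noteq> {}"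
  shows "pj C y \<in> proj C y"
  unfolding pj_def using proj_nonempty[OF assms] by (rule someI_ex)

lemma pj_cont:
  fixes C :: "'a::euclidean_space set"
  assumes C: "closed C" "C \<noteq> {}" and U: "\<forall>y\<in>U. \<exists>!p. p \<in> proj C y"
    and sub: "cball z R \<subseteq> U"
  shows "continuous_on (cball z R) (pj C)"
proof -
  obtain c0 where c0: "c0 \<in> C" using C by auto
  define T where "T = cball z (2 * R + norm (z - c0))"
  have "compact T" unfolding T_def by simp
  moreover have fim: "pj C \<in> cball z R \<rightarrow> T"
  proof
    fix y assume y: "y \<in> cball z R"
    have "norm (y - pj C y) \<le> norm (y - c0)" using pj_in[OF C, of y] c0 unfolding proj_def by auto
    also have "\<dots> \<le> norm (y - z) + norm (z - c0)" using norm_triangle_ineq[of "y - z" "z - c0"] by simp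
    finally have "norm (z - pj C y) \<le> norm (z - y) + (norm (y - z) + norm (z - c0))"
      using norm_triangle_ineq[of "z - y" "y - pj C y"] by simp
    moreover have "norm (z - y) \<le> R" "norm (y - z) \<le> R" using y by (auto simp: dist_norm norm_minus_commute)
    ultimately show "pj C y \<in> T" unfolding T_def by (simp add: dist_norm)
  qed
  moreover have "closed ((\<lambda>x. (x, pj C x)) ` cball z R)"
  proof -
    have eq: "(\<lambda>x. (x, pj C x)) ` cball z R =
      (cball z R \<times> C) \<inter> (\<Inter>c\<in>C. {w. norm (fst w - snd w) \<le> norm (fst w - c)})"
    proof (rule set_eqI, rule iffI)
      fix w assume "w \<in> (\<lambda>x. (x, pj C x)) ` cball z R"
      then obtain y where "y \<in> cball z R" "w = (y, pj C y)" by auto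
      then show "w \<in> (cball z R \<times> C) \<inter> (\<Inter>c\<in>C. {w. norm (fst w - snd w) \<le> norm (fst w - c)})"
        using pj_in[OF C, of y] unfolding proj_def by auto
    next
      fix w assume w: "w \<in> (cball z R \<times> C) \<inter> (\<Inter>c\<in>C. {w. norm (fst w - snd w) \<le> norm (fst w - c)})"
      obtain y q where wq: "w = (y, q)" by fastforce
      have y: "y \<in> cball z R" and q: "q \<in> proj C y" using w wq unfolding proj_def by auto
      have "y \<in> U" using y sub by auto
      then have ex: "\<exists>!p. p \<in> proj C y" using U by blast
      have "q = pj C y" using ex q pj_in[OF C, of y] by blast
      then show "w \<in> (\<lambda>x. (x, pj C x)) ` cball z R" using wq y by blast
    qed
    have "closed (\<Inter>c\<in>C. {w::'a \<times> 'a. norm (fst w - snd w) \<le> norm (fst w - c)})"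
      by (intro closed_INT ballI closed_Collect_le continuous_intros)
    then show ?thesis unfolding eq by (intro closed_Int closed_Times) (auto simp: C)
  qed
  ultimately show ?thesis by (rule continuous_from_closed_graph)
qed

lemma normal_extend:
  fixes C :: "'a::euclidean_space set"
  assumes C: "closed C" "C \<noteq> {}" and U: "\<forall>y\<in>U. \<exists>!p. p \<in> proj C y"
    and sub: "cball x0 R \<subseteq> U" and R: "R > 0" and p: "p \<in> proj C x0" and x0: "x0 \<notin> C"
  shows "p \<in> proj C (x0 + (R / norm (x0 - p)) *\<^sub>R (x0 - p))"
proof -
  define f where "f y = x0 + (R / norm (x0 - pj C y)) *\<^sub>R (x0 - pj C y)" for y
  have pjC: "pj C y \<in> C" for y using pj_in[OF C] proj_in by blast
  have nz: "x0 - pj C y \<noteq> 0" for y using pjC[of y] x0 by auto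
  have cont: "continuous_on (cball x0 R) f"
    unfolding f_def using pj_cont[OF C U sub] nz
    by (intro continuous_intros) auto
  have fim: "f \<in> cball x0 R \<rightarrow> cball x0 R"
  proof
    fix y assume "y \<in> cball x0 R"
    have "dist x0 (f y) = norm ((R / norm (x0 - pj C y)) *\<^sub>R (x0 - pj C y))"
      unfolding f_def dist_norm by simp
    also have "\<dots> = R" using nz[of y] R by simp
    finally show "f y \<in> cball x0 R" by simp
  qed
  obtain y1 where y1: "y1 \<in> cball x0 R" "f y1 = y1"
    using brouwer[of "cball x0 R" f] cont fim R by auto
  define q where "q = pj C y1"
  have q: "q \<in> proj C y1" unfolding q_def using pj_in[OF C] .
  define d where "d = norm (x0 - q)"
  have d: "d > 0" unfolding d_def q_def using nz by simp
  have y1eq: "y1 = x0 + (R / d) *\<^sub>R (x0 - q)" using y1(2) unfolding f_def q_def d_def by simp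
  define t where "t = d / (d + R)"
  have t: "0 \<le> t" "t \<le> 1" unfolding t_def using d R by auto
  have "q + t *\<^sub>R (y1 - q) = x0"
  proof -
    have yq: "y1 - q = (1 + R / d) *\<^sub>R (x0 - q)" unfolding y1eq by (simp add: algebra_simps)
    have "R * d + d * d > 0" using d R by (simp add: add_pos_pos)
    then have e1: "t * (1 + R / d) = 1" unfolding t_def using d R by (simp add: field_simps)
    have "t *\<^sub>R (y1 - q) = (t * (1 + R / d)) *\<^sub>R (x0 - q)" by (simp add: yq)
    also have "\<dots> = x0 - q" using e1 by simp
    finally show ?thesis by simp
  qed
  then have "q \<in> proj C x0" using proj_segment[OF q t] by simp
  moreover have "x0 \<in> U" using sub R by auto
  ultimately have "q = p" using U p by blast
  then show ?thesis using q y1eq d_def by simp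
qed

lemma normal_ineq:
  fixes C :: "'a::euclidean_space set"
  assumes C: "closed C" "C \<noteq> {}" and pr: "prox_regular C" and xs: "xs \<in> C"
  shows "\<exists>R>0. \<forall>p v. p \<in> C \<longrightarrow> norm (p - xs) < R \<longrightarrow> p \<in> proj C (p + v) \<longrightarrow>
           (\<forall>y\<in>C. (v \<bullet> (y - p)) * (2 * R) \<le> norm v * (norm (y - p))\<^sup>2)"
proof -
  obtain U where U: "open U" "C \<subseteq> U" "\<forall>x\<in>U. \<exists>!p. p \<in> proj C x"
    using pr unfolding prox_regular_def by blast
  obtain e where e: "e > 0" "ball xs e \<subseteq> U" using U(1,2) xs open_contains_ball by blast
  define R where "R = e / 4"
  have R: "R > 0" using e unfolding R_def by simp
  show ?thesis
  proof (intro exI[of _ R] conjI allI impI ballI R)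
    fix p v y assume pC: "p \<in> C" and pn: "norm (p - xs) < R" and pp: "p \<in> proj C (p + v)" and yC: "y \<in> C"
    show "(v \<bullet> (y - p)) * (2 * R) \<le> norm v * (norm (y - p))\<^sup>2"
    proof (cases "v = 0")
      case True then show ?thesis by simp
    next
      case False
      define s where "s = min 1 (R / norm v)"
      have s: "0 < s" "s \<le> 1" "s * norm v \<le> R" unfolding s_def using False R
        by (auto simp: min_def field_simps)
      define v' where "v' = s *\<^sub>R v"
      have pp': "p \<in> proj C (p + v')"
        using proj_segment[OF pp, of s] s unfolding v'_def by simp
      have nv': "norm v' = s * norm v" unfolding v'_def using s by simp
      have v'nz: "v' \<noteq> 0" unfolding v'_def using s False by simp
      define x0 where "x0 = p + v'"
      have x0C: "x0 \<notin> C"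
      proof
        assume "x0 \<in> C"
        then have "norm (x0 - p) \<le> norm (x0 - x0)" using pp' unfolding x0_def proj_def by auto
        then show False using v'nz unfolding x0_def by simp
      qed
      have sub: "cball x0 R \<subseteq> U"
      proof
        fix w assume "w \<in> cball x0 R"
        then have "norm (w - x0) \<le> R" by (simp add: dist_norm norm_minus_commute)
        moreover have "norm (x0 - xs) \<le> norm (p - xs) + norm v'" unfolding x0_def
          using norm_triangle_ineq[of "p - xs" v'] by (simp add: algebra_simps)
        moreover have "norm (w - xs) \<le> norm (w - x0) + norm (x0 - xs)"
          using norm_triangle_ineq[of "w - x0" "x0 - xs"] by simp
        ultimately have "norm (w - xs) < e" using pn s nv' e(1) unfolding R_def by linarith
        then show "w \<in> U" using e by (auto simp: dist_norm norm_minus_commute)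
      qed
      have x0p: "x0 - p = v'" unfolding x0_def by simp
      have "p \<in> proj C (x0 + (R / norm (x0 - p)) *\<^sub>R (x0 - p))"
        by (rule normal_extend[OF C U(3) sub R _ x0C]) (simp add: x0_def pp')
      then have "p \<in> proj C (p + (1 + R / norm v') *\<^sub>R v')"
        unfolding x0p unfolding x0_def by (simp add: algebra_simps)
      from proj_ineq[OF this yC]
      have "2 * (((1 + R / norm v') *\<^sub>R v') \<bullet> (y - p)) \<le> (norm (y - p))\<^sup>2" by simp
      then have "2 * ((1 + R / norm v') * (v' \<bullet> (y - p))) \<le> (norm (y - p))\<^sup>2" by simp
      then have "2 * ((norm v' + R) * (v' \<bullet> (y - p))) \<le> norm v' * (norm (y - p))\<^sup>2"
        using v'nz by (simp add: field_simps)
      then have "2 * ((norm v' + R) * (s * (v \<bullet> (y - p)))) \<le> s * norm v * (norm (y - p))\<^sup>2"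
        unfolding nv' unfolding v'_def by simp
      then have "s * (2 * ((norm v' + R) * (v \<bullet> (y - p)))) \<le> s * (norm v * (norm (y - p))\<^sup>2)"
        by (simp add: algebra_simps)
      then have A: "2 * ((norm v' + R) * (v \<bullet> (y - p))) \<le> norm v * (norm (y - p))\<^sup>2"
        using s(1) by (rule mult_left_le_imp_le)
      show ?thesis
      proof (cases "v \<bullet> (y - p) \<le> 0")
        case True then show ?thesis
          by (smt (verit) R mult_nonneg_nonneg mult_nonpos_nonneg norm_ge_zero zero_le_power2)
      next
        case False
        then have "0 \<le> norm v' * (v \<bullet> (y - p))" by simp
        then have "(v \<bullet> (y - p)) * (2 * R) \<le> 2 * ((norm v' + R) * (v \<bullet> (y - p)))"
          by (simp add: algebra_simps)
        then show ?thesis using A by linarith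
      qed
    qed
  qed
qed

lemma par_id:
  fixes a b :: "'a::real_inner"
  shows "(norm ((1/2) *\<^sub>R (a + b)))\<^sup>2 = ((norm a)\<^sup>2 + (norm b)\<^sup>2) / 2 - (norm (b - a))\<^sup>2 / 4"
  by (simp only: power2_norm_eq_inner) (simp add: inner_add_left inner_add_right inner_diff_left inner_diff_right inner_commute field_simps)

lemma cvx_id:
  fixes p u :: "'a::real_inner"
  shows "(1 - t) * (norm p)\<^sup>2 + t * (norm u)\<^sup>2 - (norm ((1 - t) *\<^sub>R p + t *\<^sub>R u))\<^sup>2 = t * (1 - t) * (norm (u - p))\<^sup>2"
  by (simp only: power2_norm_eq_inner) (simp add: inner_add_left inner_add_right inner_diff_left inner_diff_right inner_commute algebra_simps)

locale wcx =
  fixes g :: "'z::euclidean_space \<Rightarrow> real" and \<eta> Lg :: real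
  assumes eta: "\<eta> > 0" and wc: "weakly_convex \<eta> g" and lip: "Lg-lipschitz_on UNIV g"
begin

definition Phi :: "real \<Rightarrow> 'z \<Rightarrow> 'z \<Rightarrow> real" where
  "Phi \<mu> z p = g p + 1 / (2 * \<mu>) * (norm (p - z))\<^sup>2"

lemma Lg_nonneg: "0 \<le> Lg" using lip lipschitz_on_nonneg by blast

lemma g_lip: "\<bar>g a - g b\<bar> \<le> Lg * norm (a - b)"
  using lipschitz_onD[OF lip, of a b] by (simp add: dist_norm dist_real_def)

lemma g_cont: "continuous_on A g"
  using lipschitz_on_continuous_on[OF lip] continuous_on_subset by blast

lemma h_cvx: "(1 - t) *\<^sub>R a + t *\<^sub>R b = c \<Longrightarrow> 0 \<le> t \<Longrightarrow> t \<le> 1 \<Longrightarrow>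
   g c + \<eta> / 2 * (norm c)\<^sup>2 \<le> (1 - t) * (g a + \<eta> / 2 * (norm a)\<^sup>2) + t * (g b + \<eta> / 2 * (norm b)\<^sup>2)"
  using convex_onD[OF wc[unfolded weakly_convex_def], of t a b] by auto

context
  fixes \<mu> :: real
  assumes mu: "0 < \<mu>" "2 * \<mu> * \<eta> \<le> 1"
begin

lemma prox_exists: "\<exists>p. \<forall>q. Phi \<mu> z p \<le> Phi \<mu> z q"
proof -
  define r where "r = 2 * \<mu> * Lg + 1"
  have r: "r > 0" unfolding r_def using mu Lg_nonneg by (simp add: add_nonneg_pos)
  have "continuous_on (cball z r) (Phi \<mu> z)"
    unfolding Phi_def by (intro continuous_intros g_cont)
  then obtain p where p: "p \<in> cball z r" "\<And>q. q \<in> cball z r \<Longrightarrow> Phi \<mu> z p \<le> Phi \<mu> z q"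
    using continuous_attains_inf[of "cball z r" "Phi \<mu> z"] r by auto
  have "Phi \<mu> z p \<le> Phi \<mu> z q" for q
  proof (cases "q \<in> cball z r")
    case True then show ?thesis using p by auto
  next
    case False
    then have qr: "norm (q - z) > r" by (simp add: dist_norm norm_minus_commute)
    have "Phi \<mu> z p \<le> Phi \<mu> z z" using p r by auto
    also have "\<dots> = g z" unfolding Phi_def by simp
    also have "\<dots> \<le> g q + Lg * norm (q - z)" using g_lip[of z q] by (simp add: norm_minus_commute)
    also have "\<dots> \<le> Phi \<mu> z q"
    proof -
      have "Lg * norm (q - z) \<le> (norm (q - z) / (2 * \<mu>)) * norm (q - z)"
      proof (rule mult_right_mono)
        show "Lg \<le> norm (q - z) / (2 * \<mu>)" using qr mu unfolding r_def by (simp add: field_simps)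
      qed simp
      then show ?thesis unfolding Phi_def by (simp add: power2_eq_square)
    qed
    finally show ?thesis .
  qed
  then show ?thesis by blast
qed

lemma strong:
  assumes p: "\<forall>q. Phi \<mu> z p \<le> Phi \<mu> z q"
  shows "Phi \<mu> z p + (norm (y - p))\<^sup>2 / (8 * \<mu>) \<le> Phi \<mu> z y"
proof -
  define m where "m = (1/2) *\<^sub>R (p + y)"
  have m1: "(1 - 1/2) *\<^sub>R p + (1/2) *\<^sub>R y = m" unfolding m_def by (simp add: algebra_simps)
  have hc: "g m + \<eta> / 2 * (norm m)\<^sup>2 \<le> (1 - 1/2) * (g p + \<eta> / 2 * (norm p)\<^sup>2) + 1/2 * (g y + \<eta> / 2 * (norm y)\<^sup>2)"
    by (rule h_cvx[OF m1]) auto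
  have i1: "(norm m)\<^sup>2 = ((norm p)\<^sup>2 + (norm y)\<^sup>2) / 2 - (norm (y - p))\<^sup>2 / 4"
    unfolding m_def by (rule par_id)
  have hz: "(1/2) *\<^sub>R z + (1/2) *\<^sub>R z = z" by (simp flip: scaleR_add_left)
  have "m - z = (1/2) *\<^sub>R ((p - z) + (y - z))" unfolding m_def using hz by (simp add: algebra_simps)
  then have i2: "(norm (m - z))\<^sup>2 = ((norm (p - z))\<^sup>2 + (norm (y - z))\<^sup>2) / 2 - (norm (y - p))\<^sup>2 / 4"
    using par_id[of "p - z" "y - z"] by simp
  define k where "k = 1 / (2 * \<mu>)"
  define D where "D = (norm (y - p))\<^sup>2"
  have D0: "0 \<le> D" unfolding D_def by simp
  have gm: "g m \<le> (g p + g y) / 2 + \<eta> * D / 8"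
    using hc unfolding i1 D_def by (simp add: field_simps)
  have e2: "k * (norm (m - z))\<^sup>2 = k * (norm (p - z))\<^sup>2 / 2 + k * (norm (y - z))\<^sup>2 / 2 - k * D / 4"
    unfolding i2 D_def by (simp add: algebra_simps)
  have "Phi \<mu> z p \<le> Phi \<mu> z m" using p by blast
  also have "Phi \<mu> z m = g m + k * (norm (m - z))\<^sup>2" unfolding Phi_def k_def ..
  finally have A0: "Phi \<mu> z p \<le> g m + k * (norm (m - z))\<^sup>2" .
  have Pk: "Phi \<mu> z q = g q + k * (norm (q - z))\<^sup>2" for q unfolding Phi_def k_def ..
  have A: "Phi \<mu> z p \<le> (Phi \<mu> z p + Phi \<mu> z y) / 2 + \<eta> * D / 8 - k * D / 4"
    using A0 gm e2 unfolding Pk by (simp add: field_simps)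
  have "\<eta> \<le> k" unfolding k_def using mu by (simp add: field_simps)
  then have "\<eta> * D / 8 \<le> k * D / 8" using D0 by (simp add: mult_right_mono divide_right_mono)
  then have "Phi \<mu> z p + k * D / 4 \<le> Phi \<mu> z y" using A by (simp add: field_simps)
  moreover have "k * D / 4 = (norm (y - p))\<^sup>2 / (8 * \<mu>)" unfolding k_def D_def using mu by simp
  ultimately show ?thesis by simp
qed


lemma prox_min: "Phi \<mu> z (prox \<mu> g z) \<le> Phi \<mu> z q"
proof -
  obtain p where p: "\<forall>q. Phi \<mu> z p \<le> Phi \<mu> z q" using prox_exists by blast
  have "prox \<mu> g z = p"
    unfolding prox_def
  proof (rule the_equality)
    show "\<forall>q. g p + 1 / (2 * \<mu>) * (norm (p - z))\<^sup>2 \<le> g q + 1 / (2 * \<mu>) * (norm (q - z))\<^sup>2"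
      using p unfolding Phi_def .
  next
    fix p' assume "\<forall>q. g p' + 1 / (2 * \<mu>) * (norm (p' - z))\<^sup>2 \<le> g q + 1 / (2 * \<mu>) * (norm (q - z))\<^sup>2"
    then have p': "\<forall>q. Phi \<mu> z p' \<le> Phi \<mu> z q" unfolding Phi_def .
    have "Phi \<mu> z p + (norm (p' - p))\<^sup>2 / (8 * \<mu>) \<le> Phi \<mu> z p'" by (rule strong[OF p])
    moreover have "Phi \<mu> z p' \<le> Phi \<mu> z p" using p' by blast
    ultimately have "(norm (p' - p))\<^sup>2 / (8 * \<mu>) \<le> 0" by linarith
    then have "(norm (p' - p))\<^sup>2 \<le> 0" using mu by (simp add: divide_le_0_iff)
    then show "p' = p" by simp
  qed
  then show ?thesis using p by simp
qed

lemma prox_min': "\<forall>q. Phi \<mu> z (prox \<mu> g z) \<le> Phi \<mu> z q" using prox_min by blast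

lemma env_eq: "moreau_env \<mu> g z = Phi \<mu> z (prox \<mu> g z)"
  unfolding moreau_env_def Phi_def ..

lemma prox_dist: "norm (prox \<mu> g z - z) \<le> 2 * \<mu> * Lg"
proof -
  define p where "p = prox \<mu> g z"
  define d where "d = norm (p - z)"
  have "Phi \<mu> z p \<le> Phi \<mu> z z" unfolding p_def by (rule prox_min)
  then have "g p + 1 / (2 * \<mu>) * d\<^sup>2 \<le> g z" unfolding Phi_def d_def by simp
  moreover have "g z \<le> g p + Lg * d" using g_lip[of z p] unfolding d_def by (simp add: norm_minus_commute)
  ultimately have "1 / (2 * \<mu>) * d\<^sup>2 \<le> Lg * d" by linarith
  then have "d * d \<le> (2 * \<mu> * Lg) * d" using mu by (simp add: field_simps power2_eq_square)
  moreover have "d \<ge> 0" unfolding d_def by simp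
  ultimately have "d \<le> 2 * \<mu> * Lg" 
    by (metis Lg_nonneg mu(1) mult_nonneg_nonneg mult_right_le_imp_le order_le_less zero_le_numeral mult_pos_pos)
  then show ?thesis unfolding d_def p_def .
qed

lemma env_le: "moreau_env \<mu> g z \<le> g z"
  using prox_min[of z z] unfolding env_eq Phi_def by simp

lemma env_ge: "g z - 2 * \<mu> * Lg\<^sup>2 \<le> moreau_env \<mu> g z"
proof -
  define p where "p = prox \<mu> g z"
  have "g z \<le> g p + Lg * norm (p - z)" using g_lip[of z p] by (simp add: norm_minus_commute)
  also have "Lg * norm (p - z) \<le> Lg * (2 * \<mu> * Lg)"
    using prox_dist[of z] Lg_nonneg unfolding p_def by (simp add: mult_left_mono)
  finally have "g z - 2 * \<mu> * Lg\<^sup>2 \<le> g p" by (simp add: power2_eq_square algebra_simps)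
  also have "g p \<le> moreau_env \<mu> g z" unfolding env_eq Phi_def p_def using mu by simp
  finally show ?thesis .
qed

lemma quad4:
  fixes p p' z z' :: "'a::real_inner"
  shows "(norm (p' - z))\<^sup>2 - (norm (p' - z'))\<^sup>2 + (norm (p - z'))\<^sup>2 - (norm (p - z))\<^sup>2 = 2 * ((p' - p) \<bullet> (z' - z))"
  by (simp only: power2_norm_eq_inner) (simp add: inner_diff_left inner_diff_right inner_commute algebra_simps)

lemma prox_lip: "norm (prox \<mu> g z - prox \<mu> g z') \<le> 4 * norm (z - z')"
proof -
  define p where "p = prox \<mu> g z"
  define p' where "p' = prox \<mu> g z'"
  define k where "k = 1 / (2 * \<mu>)"
  have k: "k > 0" unfolding k_def using mu by simp
  have Pk: "Phi \<mu> a q = g q + k * (norm (q - a))\<^sup>2" for a q unfolding Phi_def k_def ..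
  have s1: "Phi \<mu> z p + (norm (p' - p))\<^sup>2 / (8 * \<mu>) \<le> Phi \<mu> z p'"
    unfolding p_def by (rule strong[OF prox_min'])
  have s2: "Phi \<mu> z' p' + (norm (p - p'))\<^sup>2 / (8 * \<mu>) \<le> Phi \<mu> z' p"
    unfolding p'_def by (rule strong[OF prox_min'])
  have "2 * ((norm (p' - p))\<^sup>2 / (8 * \<mu>)) \<le> k * ((norm (p' - z))\<^sup>2 - (norm (p' - z'))\<^sup>2 + (norm (p - z'))\<^sup>2 - (norm (p - z))\<^sup>2)"
    using s1 s2 unfolding Pk by (simp add: norm_minus_commute field_simps)
  also have "\<dots> = k * (2 * ((p' - p) \<bullet> (z' - z)))" by (simp only: quad4)
  also have "\<dots> \<le> k * (2 * (norm (p' - p) * norm (z' - z)))"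
    using k mult_left_mono[OF norm_cauchy_schwarz[of "p' - p" "z' - z"], of "2 * k"] by (simp add: algebra_simps)
  finally have "(norm (p' - p))\<^sup>2 \<le> 4 * (norm (p' - p) * norm (z' - z))"
    unfolding k_def using mu by (simp add: field_simps)
  then have "norm (p' - p) * norm (p' - p) \<le> (4 * norm (z' - z)) * norm (p' - p)"
    by (simp add: power2_eq_square algebra_simps)
  then have "norm (p' - p) \<le> 4 * norm (z' - z)"
    by (metis mult_right_le_imp_le norm_ge_zero order_le_less mult_nonneg_nonneg zero_le_numeral norm_le_zero_iff)
  then show ?thesis unfolding p_def p'_def by (simp add: norm_minus_commute)
qed

definition wg :: "'z \<Rightarrow> 'z" where "wg z = (1 / \<mu>) *\<^sub>R (z - prox \<mu> g z)"

lemma env_quad: "\<bar>moreau_env \<mu> g z' - moreau_env \<mu> g z - wg z \<bullet> (z' - z)\<bar> \<le> 4 / \<mu> * (norm (z' - z))\<^sup>2"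
proof -
  define p where "p = prox \<mu> g z"
  define p' where "p' = prox \<mu> g z'"
  define k where "k = 1 / (2 * \<mu>)"
  define h where "h = z' - z"
  have k: "k > 0" unfolding k_def using mu by simp
  have Pk: "Phi \<mu> a q = g q + k * (norm (q - a))\<^sup>2" for a q unfolding Phi_def k_def ..
  have wz: "wg z \<bullet> h = 2 * k * ((z - p) \<bullet> h)" unfolding wg_def p_def k_def by simp
  have e: "moreau_env \<mu> g z = Phi \<mu> z p" "moreau_env \<mu> g z' = Phi \<mu> z' p'"
    unfolding p_def p'_def by (rule env_eq)+
  have up: "Phi \<mu> z' p' \<le> Phi \<mu> z' p" unfolding p'_def by (rule prox_min)
  have lo: "Phi \<mu> z p \<le> Phi \<mu> z p'" unfolding p_def by (rule prox_min)
  have i1: "(norm (p - z'))\<^sup>2 = (norm (p - z))\<^sup>2 - 2 * ((p - z) \<bullet> h) + (norm h)\<^sup>2"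
    using nsq_diff[of "p - z" h] unfolding h_def by (simp add: algebra_simps)
  have i2: "(norm (p' - z'))\<^sup>2 = (norm (p' - z))\<^sup>2 - 2 * ((p' - z) \<bullet> h) + (norm h)\<^sup>2"
    using nsq_diff[of "p' - z" h] unfolding h_def by (simp add: algebra_simps)
  have U: "moreau_env \<mu> g z' - moreau_env \<mu> g z - wg z \<bullet> h \<le> k * (norm h)\<^sup>2"
  proof -
    have "moreau_env \<mu> g z' - moreau_env \<mu> g z \<le> Phi \<mu> z' p - Phi \<mu> z p" using e up by simp
    also have "\<dots> = k * ((norm (p - z'))\<^sup>2 - (norm (p - z))\<^sup>2)" unfolding Pk by (simp add: algebra_simps)
    also have "\<dots> = k * (- 2 * ((p - z) \<bullet> h) + (norm h)\<^sup>2)" unfolding i1 by simp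
    also have "\<dots> = wg z \<bullet> h + k * (norm h)\<^sup>2" unfolding wz by (simp add: algebra_simps inner_diff_left inner_commute)
    finally show ?thesis by simp
  qed
  have L: "- (4 / \<mu>) * (norm h)\<^sup>2 \<le> moreau_env \<mu> g z' - moreau_env \<mu> g z - wg z \<bullet> h"
  proof -
    have "k * ((norm (p' - z'))\<^sup>2 - (norm (p' - z))\<^sup>2) = Phi \<mu> z' p' - Phi \<mu> z p'" unfolding Pk by (simp add: algebra_simps)
    also have "\<dots> \<le> moreau_env \<mu> g z' - moreau_env \<mu> g z" using e lo by simp
    finally have A: "k * (- 2 * ((p' - z) \<bullet> h) + (norm h)\<^sup>2) \<le> moreau_env \<mu> g z' - moreau_env \<mu> g z"
      unfolding i2 by simp
    have B: "k * (- 2 * ((p' - z) \<bullet> h) + (norm h)\<^sup>2) - wg z \<bullet> h = 2 * k * ((p - p') \<bullet> h) + k * (norm h)\<^sup>2"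
      unfolding wz by (simp add: algebra_simps inner_diff_left inner_commute)
    have "- ((p - p') \<bullet> h) \<le> norm (p - p') * norm h" 
      using Cauchy_Schwarz_ineq2[of "p - p'" h] by (simp add: abs_le_iff)
    also have "\<dots> \<le> (4 * norm h) * norm h" 
      using prox_lip[of z z'] unfolding p_def p'_def h_def by (simp add: mult_right_mono norm_minus_commute)
    finally have C0: "- ((p - p') \<bullet> h) \<le> (4 * norm h) * norm h" .
    have C: "- (2 * k * ((p - p') \<bullet> h)) \<le> 2 * k * (4 * (norm h)\<^sup>2)"
      using mult_left_mono[OF C0, of "2 * k"] k by (simp add: algebra_simps power2_eq_square)
    have D: "2 * k * (4 * (norm h)\<^sup>2) = (4 / \<mu>) * (norm h)\<^sup>2" unfolding k_def using mu by simp
    have E: "0 \<le> k * (norm h)\<^sup>2" using k by simp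
    show ?thesis using A B C D E by linarith
  qed
  have "k \<le> 4 / \<mu>" unfolding k_def using mu by (simp add: field_simps)
  then have "k * (norm h)\<^sup>2 \<le> 4 / \<mu> * (norm h)\<^sup>2" by (rule mult_right_mono) simp
  then show ?thesis using U L unfolding h_def[symmetric] by (simp add: abs_le_iff)
qed

end
end

lemma lin1: "(gp::real) - k*(2*t*X + t^2*N) \<le> gq \<Longrightarrow> gq \<le> (1-t)*gp + t*gu + e/2*(t*(1-t)*N) \<Longrightarrow> t*(gp - 2*k*X - k*t*N) \<le> t*(gu + e/2*(1-t)*N)"
  by (simp add: field_simps power2_eq_square)
lemma lin2: "(gp::real) - 2*k*X - k*t*N \<le> gu + e/2*(1-t)*N \<Longrightarrow> -(2*k*X) = W \<Longrightarrow> k*t = e/2 \<Longrightarrow> e/2*(1-t)*N \<le> e/2*N \<Longrightarrow> gp + W - e*N \<le> gu"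
  by (simp add: field_simps)

context wcx begin

context
  fixes \<mu> :: real
  assumes mu: "0 < \<mu>" "2 * \<mu> * \<eta> \<le> 1"
begin

lemma env_deriv: "(moreau_env \<mu> g has_derivative (\<lambda>h. wg \<mu> z \<bullet> h)) (at z)"
  unfolding has_derivative_iff_norm
proof (intro conjI)
  show "bounded_linear (\<lambda>h. wg \<mu> z \<bullet> h)" by (rule bounded_linear_inner_right)
  have lim0: "((\<lambda>y. (4 / \<mu>) * norm (y - z)) \<longlongrightarrow> (4 / \<mu>) * norm (z - z)) (at z)"
    by (intro tendsto_intros)
  have lim: "((\<lambda>y. (4 / \<mu>) * norm (y - z)) \<longlongrightarrow> 0) (at z)" using lim0 by simp
  show "((\<lambda>y. norm (moreau_env \<mu> g y - moreau_env \<mu> g z - wg \<mu> z \<bullet> (y - z)) / norm (y - z)) \<longlongrightarrow> 0) (at z)"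
  proof (rule Lim_null_comparison[OF _ lim])
    show "\<forall>\<^sub>F y in at z. norm (norm (moreau_env \<mu> g y - moreau_env \<mu> g z - wg \<mu> z \<bullet> (y - z)) / norm (y - z)) \<le> 4 / \<mu> * norm (y - z)"
    proof (rule always_eventually, rule allI)
      fix y
      have q: "\<bar>moreau_env \<mu> g y - moreau_env \<mu> g z - wg \<mu> z \<bullet> (y - z)\<bar> \<le> 4 / \<mu> * (norm (y - z))\<^sup>2"
        by (rule env_quad[OF mu])
      show "norm (norm (moreau_env \<mu> g y - moreau_env \<mu> g z - wg \<mu> z \<bullet> (y - z)) / norm (y - z)) \<le> 4 / \<mu> * norm (y - z)"
      proof (cases "y = z")
        case True then show ?thesis by simp
      next
        case False
        then have n: "norm (y - z) > 0" by simp
        have "\<bar>moreau_env \<mu> g y - moreau_env \<mu> g z - wg \<mu> z \<bullet> (y - z)\<bar> / norm (y - z) \<le> 4 / \<mu> * (norm (y - z))\<^sup>2 / norm (y - z)"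
          by (rule divide_right_mono[OF q]) simp
        also have "\<dots> = 4 / \<mu> * norm (y - z)" using n by (simp add: power2_eq_square)
        finally show ?thesis by simp
      qed
    qed
  qed
qed

lemma subgrad:
  "g (prox \<mu> g z) + wg \<mu> z \<bullet> (u - prox \<mu> g z) - \<eta> * (norm (u - prox \<mu> g z))\<^sup>2 \<le> g u"
proof -
  define p where "p = prox \<mu> g z"
  define t where "t = \<mu> * \<eta>"
  define d where "d = u - p"
  define k where "k = 1 / (2 * \<mu>)"
  define q where "q = (1 - t) *\<^sub>R p + t *\<^sub>R u"
  have t: "0 < t" "t \<le> 1" unfolding t_def using mu eta by auto
  have qd: "q - z = (p - z) + t *\<^sub>R d" unfolding q_def d_def by (simp add: algebra_simps)
  have min: "g p + k * (norm (p - z))\<^sup>2 \<le> g q + k * (norm (q - z))\<^sup>2"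
    using prox_min[OF mu, of z q] unfolding Phi_def p_def k_def .
  have i1: "(norm (q - z))\<^sup>2 = (norm (p - z))\<^sup>2 + 2 * t * ((p - z) \<bullet> d) + t\<^sup>2 * (norm d)\<^sup>2"
    unfolding qd nsq_add by (simp add: power2_eq_square algebra_simps)
  have cv: "g q + \<eta> / 2 * (norm q)\<^sup>2 \<le> (1 - t) * (g p + \<eta> / 2 * (norm p)\<^sup>2) + t * (g u + \<eta> / 2 * (norm u)\<^sup>2)"
    by (rule h_cvx) (use t q_def in auto)
  have i2: "(1 - t) * (norm p)\<^sup>2 + t * (norm u)\<^sup>2 - (norm q)\<^sup>2 = t * (1 - t) * (norm d)\<^sup>2"
    unfolding q_def d_def by (rule cvx_id)
  have gq: "g q \<le> (1 - t) * g p + t * g u + \<eta> / 2 * (t * (1 - t) * (norm d)\<^sup>2)"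
  proof -
    have "g q \<le> (1 - t) * g p + t * g u + \<eta> / 2 * ((1 - t) * (norm p)\<^sup>2 + t * (norm u)\<^sup>2 - (norm q)\<^sup>2)"
      using cv by (simp add: field_simps)
    then show ?thesis unfolding i2 .
  qed
  have "g p - k * (2 * t * ((p - z) \<bullet> d) + t\<^sup>2 * (norm d)\<^sup>2) \<le> g q"
    using min unfolding i1 by (simp add: algebra_simps)
  then have "t * (g p - 2 * k * ((p - z) \<bullet> d) - k * t * (norm d)\<^sup>2) \<le> t * (g u + \<eta> / 2 * (1 - t) * (norm d)\<^sup>2)"
    using gq by (rule lin1)
  then have A: "g p - 2 * k * ((p - z) \<bullet> d) - k * t * (norm d)\<^sup>2 \<le> g u + \<eta> / 2 * (1 - t) * (norm d)\<^sup>2"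
    using t(1) by (rule mult_left_le_imp_le)
  have B: "- (2 * k * ((p - z) \<bullet> d)) = wg \<mu> z \<bullet> d"
    unfolding wg_def[OF mu] p_def k_def using mu by (simp add: inner_diff_left inner_diff_right inner_commute algebra_simps)
  have C: "k * t = \<eta> / 2" unfolding k_def t_def using mu by simp
  have D: "\<eta> / 2 * (1 - t) * (norm d)\<^sup>2 \<le> \<eta> / 2 * (norm d)\<^sup>2"
    using t eta by (simp add: mult_right_mono)
  have "g p + wg \<mu> z \<bullet> d - \<eta> * (norm d)\<^sup>2 \<le> g u"
    using A B C D by (rule lin2)
  then show ?thesis unfolding p_def d_def .
qed

end

lemma env_mono:
  assumes mu: "0 < \<mu>" "2 * \<mu> * \<eta> \<le> 1" and mu': "0 < \<mu>'" "\<mu>' \<le> \<mu>"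
  shows "moreau_env \<mu>' g z \<le> moreau_env \<mu> g z + 2 * Lg\<^sup>2 * (\<mu> / \<mu>') * (\<mu> - \<mu>')"
proof -
  have mu2: "2 * \<mu>' * \<eta> \<le> 1" using mu mu' eta by (smt (verit) mult_right_mono)
  define p where "p = prox \<mu> g z"
  define N where "N = (norm (p - z))\<^sup>2"
  have N: "N \<le> (2 * \<mu> * Lg)\<^sup>2" unfolding N_def p_def
    using prox_dist[OF mu, of z] by (simp add: power_mono)
  have "moreau_env \<mu>' g z \<le> Phi \<mu>' z p" unfolding env_eq[OF mu'(1) mu2] by (rule prox_min[OF mu'(1) mu2])
  also have "\<dots> = moreau_env \<mu> g z + N * (1 / (2 * \<mu>') - 1 / (2 * \<mu>))"
    unfolding env_eq[OF mu] Phi_def p_def N_def by (simp add: algebra_simps)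
  also have "N * (1 / (2 * \<mu>') - 1 / (2 * \<mu>)) \<le> (2 * \<mu> * Lg)\<^sup>2 * (1 / (2 * \<mu>') - 1 / (2 * \<mu>))"
  proof (rule mult_right_mono[OF N])
    show "0 \<le> 1 / (2 * \<mu>') - 1 / (2 * \<mu>)" using mu mu' by (simp add: field_simps)
  qed
  also have "(2 * \<mu> * Lg)\<^sup>2 * (1 / (2 * \<mu>') - 1 / (2 * \<mu>)) = 2 * Lg\<^sup>2 * (\<mu> / \<mu>') * (\<mu> - \<mu>')"
    using mu mu' by (simp add: field_simps power2_eq_square)
  finally show ?thesis by simp
qed

end

lemma subdiff_quad:
  fixes J :: "'a::real_inner \<Rightarrow> ereal"
  assumes Jx: "J x = ereal J0" and K: "0 \<le> K"
    and lb: "\<And>y. ereal (J0 + v \<bullet> (y - x) - K * (norm (y - x))\<^sup>2) \<le> J y"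
  shows "v \<in> frechet_subdiff J x"
  unfolding frechet_subdiff_def
proof (intro CollectI conjI)
  show "J x < \<infinity>" using Jx by simp
  let ?Q = "\<lambda>y. (J y - J x - ereal (v \<bullet> (y - x))) / ereal (norm (y - x))"
  show "0 \<le> (SUP \<epsilon>\<in>{0<..}. INF y\<in>{y. 0 < norm (y - x) \<and> norm (y - x) < \<epsilon>}. ?Q y)"
  proof (rule ereal_le_epsilon2)
    fix \<delta> :: real assume d: "0 < \<delta>"
    define e where "e = \<delta> / (K + 1)"
    have e: "e > 0" unfolding e_def using d K by simp
    have Ke: "K * e \<le> \<delta>" unfolding e_def using d K by (simp add: field_simps)
    have "ereal (- \<delta>) \<le> (INF y\<in>{y. 0 < norm (y - x) \<and> norm (y - x) < e}. ?Q y)"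
    proof (rule INF_greatest)
      fix y assume "y \<in> {y. 0 < norm (y - x) \<and> norm (y - x) < e}"
      then have n: "0 < norm (y - x)" "norm (y - x) < e" by auto
      have "K * norm (y - x) \<le> K * e" using n K by (simp add: mult_left_mono)
      then have b: "- \<delta> \<le> - K * norm (y - x)" using Ke by linarith
      show "ereal (- \<delta>) \<le> ?Q y"
      proof (cases "J y")
        case (real r)
        have "J0 + v \<bullet> (y - x) - K * (norm (y - x))\<^sup>2 \<le> r" using lb[of y] real by simp
        then have "- K * (norm (y - x))\<^sup>2 \<le> r - J0 - v \<bullet> (y - x)" by simp
        then have "- K * (norm (y - x))\<^sup>2 / norm (y - x) \<le> (r - J0 - v \<bullet> (y - x)) / norm (y - x)"
          by (rule divide_right_mono) simp
        moreover have "- K * (norm (y - x))\<^sup>2 / norm (y - x) = - K * norm (y - x)" using n by (simp add: power2_eq_square)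
        ultimately have "- \<delta> \<le> (r - J0 - v \<bullet> (y - x)) / norm (y - x)" using b by linarith
        then show ?thesis using real Jx n by simp
      next
        case PInf
        then show ?thesis using Jx n by simp
      next
        case MInf
        then show ?thesis using lb[of y] by simp
      qed
    qed
    also have "\<dots> \<le> (SUP \<epsilon>\<in>{0<..}. INF y\<in>{y. 0 < norm (y - x) \<and> norm (y - x) < \<epsilon>}. ?Q y)"
      by (rule SUP_upper) (use e in simp)
    finally have "ereal (- \<delta>) \<le> (SUP \<epsilon>\<in>{0<..}. INF y\<in>{y. 0 < norm (y - x) \<and> norm (y - x) < \<epsilon>}. ?Q y)" .
    then show "0 \<le> (SUP \<epsilon>\<in>{0<..}. INF y\<in>{y. 0 < norm (y - x) \<and> norm (y - x) < \<epsilon>}. ?Q y) + ereal \<delta>"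
      by (cases "(SUP \<epsilon>\<in>{0<..}. INF y\<in>{y. 0 < norm (y - x) \<and> norm (y - x) < \<epsilon>}. ?Q y)") auto
  qed
qed

lemma subdiff_unique:
  fixes f :: "'a::real_inner \<Rightarrow> real"
  assumes fd: "(f has_derivative (\<lambda>h. u \<bullet> h)) (at x)" and v: "v \<in> frechet_subdiff (\<lambda>y. ereal (f y)) x"
  shows "v = u"
proof (rule ccontr)
  assume "v \<noteq> u"
  define d where "d = u - v"
  define nd where "nd = norm d"
  have nd: "nd > 0" unfolding nd_def d_def using \<open>v \<noteq> u\<close> by simp
  let ?Q = "\<lambda>y. (ereal (f y) - ereal (f x) - ereal (v \<bullet> (y - x))) / ereal (norm (y - x))"
  have sup: "0 \<le> (SUP \<epsilon>\<in>{0<..}. INF y\<in>{y. 0 < norm (y - x) \<and> norm (y - x) < \<epsilon>}. ?Q y)"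
    using v unfolding frechet_subdiff_def by simp
  have "((\<lambda>y. norm ((f y - f x) - u \<bullet> (y - x)) / norm (y - x)) \<longlongrightarrow> 0) (at x)"
    using fd unfolding has_derivative_iff_norm by simp
  then have "\<forall>\<^sub>F y in at x. norm ((f y - f x) - u \<bullet> (y - x)) / norm (y - x) < nd / 2"
    using nd by (intro order_tendstoD(2)) auto
  then obtain \<delta> where \<delta>: "\<delta> > 0" "\<And>y. y \<noteq> x \<Longrightarrow> dist y x < \<delta> \<Longrightarrow> norm ((f y - f x) - u \<bullet> (y - x)) / norm (y - x) < nd / 2"
    unfolding eventually_at by auto
  have "(SUP \<epsilon>\<in>{0<..}. INF y\<in>{y. 0 < norm (y - x) \<and> norm (y - x) < \<epsilon>}. ?Q y) \<le> ereal (- nd / 2)"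
  proof (rule SUP_least)
    fix e :: real assume "e \<in> {0<..}"
    then have e: "e > 0" by simp
    define t where "t = min e \<delta> / (2 * nd)"
    have t: "t > 0" unfolding t_def using e \<delta> nd by simp
    define y where "y = x - t *\<^sub>R d"
    have ny: "norm (y - x) = t * nd" unfolding y_def nd_def using t by simp
    have ny2: "t * nd = min e \<delta> / 2" unfolding t_def using nd by simp
    have yin: "y \<in> {y. 0 < norm (y - x) \<and> norm (y - x) < e}" using ny ny2 t nd e \<delta> by auto
    have "y \<noteq> x" "dist y x < \<delta>" using ny ny2 t nd e \<delta> by (auto simp: dist_norm)
    then have bd: "norm ((f y - f x) - u \<bullet> (y - x)) / norm (y - x) < nd / 2" by (rule \<delta>(2))
    have dd: "d \<bullet> (y - x) = - t * nd\<^sup>2" unfolding y_def nd_def by (simp add: power2_norm_eq_inner)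
    have "(f y - f x - v \<bullet> (y - x)) = (f y - f x - u \<bullet> (y - x)) + d \<bullet> (y - x)"
      unfolding d_def by (simp add: inner_diff_left)
    then have "(f y - f x - v \<bullet> (y - x)) / norm (y - x) = (f y - f x - u \<bullet> (y - x)) / norm (y - x) - nd"
      using dd ny t nd by (simp add: field_simps power2_eq_square)
    also have "\<dots> \<le> norm ((f y - f x) - u \<bullet> (y - x)) / norm (y - x) - nd"
      by (simp add: divide_right_mono)
    finally have "(f y - f x - v \<bullet> (y - x)) / norm (y - x) \<le> - nd / 2" using bd by linarith
    then have "?Q y \<le> ereal (- nd / 2)" using ny t nd by simp
    then show "(INF y\<in>{y. 0 < norm (y - x) \<and> norm (y - x) < e}. ?Q y) \<le> ereal (- nd / 2)"
      by (rule INF_lower2[OF yin])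
  qed
  with sup have "0 \<le> ereal (- nd / 2)" by (rule order_trans)
  then show False using nd by simp
qed

locale cmp = wcx g \<eta> Lg for g :: "'z::euclidean_space \<Rightarrow> real" and \<eta> Lg +
  fixes S :: "'x::euclidean_space \<Rightarrow> 'z" and S' :: "'x \<Rightarrow> 'x \<Rightarrow>\<^sub>L 'z" and LS LD :: real
  assumes S_deriv: "\<And>y. (S has_derivative blinfun_apply (S' y)) (at y)"
    and S_lip: "LS-lipschitz_on UNIV S" and DS_lip: "LD-lipschitz_on UNIV S'"
begin

lemma LS_nonneg: "0 \<le> LS" using S_lip lipschitz_on_nonneg by blast
lemma LD_nonneg: "0 \<le> LD" using DS_lip lipschitz_on_nonneg by blast

lemma S_lipD: "norm (S a - S b) \<le> LS * norm (a - b)"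
  using lipschitz_onD[OF S_lip, of a b] by (simp add: dist_norm)

lemma S_rem: "norm (S y - S x - S' x (y - x)) \<le> LD * (norm (y - x))\<^sup>2"
proof -
  have "norm (S y - S x - blinfun_apply (S' x) (y - x)) \<le> norm (y - x) * (LD * norm (y - x))"
  proof (rule differentiable_bound_linearization[where S = "closed_segment x y"])
    show "x + t *\<^sub>R (y - x) \<in> closed_segment x y" if "t \<in> {0..1}" for t
      using that unfolding in_segment(1) by (intro exI[of _ t]) (auto simp: algebra_simps)
    show "(S has_derivative blinfun_apply (S' \<xi>)) (at \<xi> within closed_segment x y)" for \<xi>
      by (rule has_derivative_at_withinI[OF S_deriv])
    show "onorm (blinfun_apply (S' \<xi>) - blinfun_apply (S' x)) \<le> LD * norm (y - x)"
      if "\<xi> \<in> closed_segment x y" for \<xi>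
    proof -
      have "onorm (blinfun_apply (S' \<xi>) - blinfun_apply (S' x)) = norm (S' \<xi> - S' x)"
        by (simp add: norm_blinfun.rep_eq minus_blinfun.rep_eq fun_diff_def)
      also have "\<dots> \<le> LD * norm (\<xi> - x)"
        using lipschitz_onD[OF DS_lip, of \<xi> x] by (simp add: dist_norm)
      also have "\<dots> \<le> LD * norm (y - x)"
        using segment_bound(1)[OF that] LD_nonneg by (simp add: mult_left_mono)
      finally show ?thesis .
    qed
    show "x \<in> closed_segment x y" by simp
  qed
  then show ?thesis by (simp add: power2_eq_square algebra_simps)
qed

lemma S'_bound: "norm (S' x h) \<le> norm (S' x) * norm h"
  by (rule norm_blinfun)

context
  fixes \<mu> :: real
  assumes mu: "0 < \<mu>" "2 * \<mu> * \<eta> \<le> 1"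
begin

lemma wg_bound: "norm (wg \<mu> z) \<le> 2 * Lg"
proof -
  have "norm (wg \<mu> z) = norm (z - prox \<mu> g z) / \<mu>" unfolding wg_def[OF mu] using mu by simp
  also have "\<dots> \<le> (2 * \<mu> * Lg) / \<mu>"
  proof (rule divide_right_mono)
    show "norm (z - prox \<mu> g z) \<le> 2 * \<mu> * Lg" using prox_dist[OF mu, of z] by (simp add: norm_minus_commute)
  qed (use mu in simp)
  also have "\<dots> = 2 * Lg" using mu by simp
  finally show ?thesis .
qed

lemma comp_quad:
  "\<bar>moreau_env \<mu> g (S y) - moreau_env \<mu> g (S x) - wg \<mu> (S x) \<bullet> S' x (y - x)\<bar>
     \<le> (4 * LS\<^sup>2 / \<mu> + 2 * Lg * LD) * (norm (y - x))\<^sup>2"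
proof -
  define R where "R = S y - S x - S' x (y - x)"
  define N where "N = (norm (y - x))\<^sup>2"
  have N0: "0 \<le> N" unfolding N_def by simp
  have R: "norm R \<le> LD * N" unfolding R_def N_def by (rule S_rem)
  have q: "\<bar>moreau_env \<mu> g (S y) - moreau_env \<mu> g (S x) - wg \<mu> (S x) \<bullet> (S y - S x)\<bar> \<le> 4 / \<mu> * (norm (S y - S x))\<^sup>2"
    by (rule env_quad[OF mu])
  have "(norm (S y - S x))\<^sup>2 \<le> (LS * norm (y - x))\<^sup>2"
    using S_lipD[of y x] by (simp add: power_mono)
  then have "4 / \<mu> * (norm (S y - S x))\<^sup>2 \<le> 4 / \<mu> * (LS * norm (y - x))\<^sup>2"
    by (rule mult_left_mono) (use mu in simp)
  also have "\<dots> = 4 * LS\<^sup>2 / \<mu> * N" unfolding N_def by (simp add: power_mult_distrib)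
  finally have q2: "\<bar>moreau_env \<mu> g (S y) - moreau_env \<mu> g (S x) - wg \<mu> (S x) \<bullet> (S y - S x)\<bar> \<le> 4 * LS\<^sup>2 / \<mu> * N"
    using q by linarith
  have sp: "wg \<mu> (S x) \<bullet> (S y - S x) = wg \<mu> (S x) \<bullet> S' x (y - x) + wg \<mu> (S x) \<bullet> R"
    unfolding R_def by (simp add: inner_diff_right)
  have "\<bar>wg \<mu> (S x) \<bullet> R\<bar> \<le> norm (wg \<mu> (S x)) * norm R" by (rule Cauchy_Schwarz_ineq2)
  also have "\<dots> \<le> (2 * Lg) * (LD * N)"
    using wg_bound R Lg_nonneg by (intro mult_mono) auto
  finally have wr: "\<bar>wg \<mu> (S x) \<bullet> R\<bar> \<le> 2 * Lg * LD * N" by simp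
  have "\<bar>moreau_env \<mu> g (S y) - moreau_env \<mu> g (S x) - wg \<mu> (S x) \<bullet> S' x (y - x)\<bar>
      \<le> 4 * LS\<^sup>2 / \<mu> * N + 2 * Lg * LD * N"
    using q2 wr unfolding sp by linarith
  also have "\<dots> = (4 * LS\<^sup>2 / \<mu> + 2 * Lg * LD) * N" by (simp add: algebra_simps)
  finally show ?thesis unfolding N_def .
qed

lemma comp_deriv: "((\<lambda>y. moreau_env \<mu> g (S y)) has_derivative (\<lambda>h. wg \<mu> (S x) \<bullet> S' x h)) (at x)"
  using diff_chain_at[OF S_deriv env_deriv[OF mu]] by (simp add: o_def)

lemma grad_eq: "grad (\<lambda>y. moreau_env \<mu> g (S y)) x = adjoint (blinfun_apply (S' x)) (wg \<mu> (S x))"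
proof -
  define a where "a = adjoint (blinfun_apply (S' x)) (wg \<mu> (S x))"
  have lin: "linear (blinfun_apply (S' x))" by (simp add: blinfun.bounded_linear_right bounded_linear.linear)
  have fa: "(\<lambda>h. a \<bullet> h) = (\<lambda>h. wg \<mu> (S x) \<bullet> S' x h)"
    unfolding a_def using adjoint_works[OF lin] by (auto simp: inner_commute)
  have d: "((\<lambda>y. moreau_env \<mu> g (S y)) has_derivative (\<lambda>h. a \<bullet> h)) (at x)"
    unfolding fa by (rule comp_deriv)
  show ?thesis unfolding grad_def a_def[symmetric]
  proof (rule the_equality)
    show "((\<lambda>y. moreau_env \<mu> g (S y)) has_derivative (\<lambda>h. a \<bullet> h)) (at x)" by (rule d)
  next
    fix v assume "((\<lambda>y. moreau_env \<mu> g (S y)) has_derivative (\<lambda>h. v \<bullet> h)) (at x)"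
    from has_derivative_unique[OF this d] have "(\<lambda>h. v \<bullet> h) = (\<lambda>h. a \<bullet> h)" .
    then have "v \<bullet> (v - a) = a \<bullet> (v - a)" by metis
    then have "(v - a) \<bullet> (v - a) = 0" by (simp add: inner_diff_left)
    then show "v = a" by simp
  qed
qed

lemma grad_inner: "grad (\<lambda>y. moreau_env \<mu> g (S y)) x \<bullet> h = wg \<mu> (S x) \<bullet> S' x h"
proof -
  have lin: "linear (blinfun_apply (S' x))" by (simp add: blinfun.bounded_linear_right bounded_linear.linear)
  show ?thesis unfolding grad_eq using adjoint_works[OF lin, of h "wg \<mu> (S x)"] by (simp add: inner_commute)
qed

lemma grad_deriv: "((\<lambda>y. moreau_env \<mu> g (S y)) has_derivative (\<lambda>h. grad (\<lambda>y. moreau_env \<mu> g (S y)) x \<bullet> h)) (at x)"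
  unfolding grad_inner by (rule comp_deriv)

lemma grad_bound: "norm (grad (\<lambda>y. moreau_env \<mu> g (S y)) x) \<le> 2 * Lg * norm (S' x)"
proof -
  define G where "G = grad (\<lambda>y. moreau_env \<mu> g (S y)) x"
  have "(norm G)\<^sup>2 = G \<bullet> G" by (simp add: power2_norm_eq_inner)
  also have "\<dots> = wg \<mu> (S x) \<bullet> S' x G" unfolding G_def by (rule grad_inner)
  also have "\<dots> \<le> norm (wg \<mu> (S x)) * norm (S' x G)" by (rule norm_cauchy_schwarz)
  also have "\<dots> \<le> (2 * Lg) * (norm (S' x) * norm G)"
    by (intro mult_mono wg_bound S'_bound) (auto simp: Lg_nonneg)
  finally have "norm G * norm G \<le> (2 * Lg * norm (S' x)) * norm G" by (simp add: power2_eq_square algebra_simps)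
  then have "norm G \<le> 2 * Lg * norm (S' x)"
    by (metis mult_right_le_imp_le norm_ge_zero order_le_less mult_nonneg_nonneg Lg_nonneg zero_le_numeral norm_le_zero_iff)
  then show ?thesis unfolding G_def .
qed

lemma grad_quad:
  "\<bar>moreau_env \<mu> g (S y) - moreau_env \<mu> g (S x) - grad (\<lambda>y. moreau_env \<mu> g (S y)) x \<bullet> (y - x)\<bar>
     \<le> (4 * LS\<^sup>2 / \<mu> + 2 * Lg * LD) * (norm (y - x))\<^sup>2"
  unfolding grad_inner by (rule comp_quad)

lemma grad_subdiff:
  "frechet_subdiff (\<lambda>y. ereal (moreau_env \<mu> g (S y))) x = {grad (\<lambda>y. moreau_env \<mu> g (S y)) x}"
proof (intro set_eqI iffI)
  fix v assume "v \<in> frechet_subdiff (\<lambda>y. ereal (moreau_env \<mu> g (S y))) x"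
  then show "v \<in> {grad (\<lambda>y. moreau_env \<mu> g (S y)) x}" using subdiff_unique[OF grad_deriv] by simp
next
  fix v assume "v \<in> {grad (\<lambda>y. moreau_env \<mu> g (S y)) x}"
  then have v: "v = grad (\<lambda>y. moreau_env \<mu> g (S y)) x" by simp
  have K: "0 \<le> 4 * LS\<^sup>2 / \<mu> + 2 * Lg * LD" using mu Lg_nonneg LD_nonneg by simp
  show "v \<in> frechet_subdiff (\<lambda>y. ereal (moreau_env \<mu> g (S y))) x"
  proof (rule subdiff_quad[OF refl K])
    fix y show "ereal (moreau_env \<mu> g (S x) + v \<bullet> (y - x) - (4 * LS\<^sup>2 / \<mu> + 2 * Lg * LD) * (norm (y - x))\<^sup>2)
      \<le> ereal (moreau_env \<mu> g (S y))"
      using grad_quad[of y x] unfolding v by (simp add: abs_le_iff)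
  qed
qed

end
end

locale algo = cmp g \<eta> Lg S S' LS LD for g :: "'z::euclidean_space \<Rightarrow> real" and \<eta> Lg
    and S :: "'x::euclidean_space \<Rightarrow> 'z" and S' LS LD +
  fixes C :: "'x set" and c \<rho> \<gamma>t \<alpha> :: real and x :: "nat \<Rightarrow> 'x" and \<gamma> \<mu> :: "nat \<Rightarrow> real"
    and Fn :: "nat \<Rightarrow> 'x \<Rightarrow> real"
  assumes C_ne: "C \<noteq> {}" and C_closed: "closed C" and C_pr: "prox_regular C"
    and argmin_ne: "\<exists>y\<in>C. \<forall>w\<in>C. g (S y) \<le> g (S w)"
    and x1: "x 1 \<in> C"
    and c: "0 < c" "c < 1 / 2"
    and rho: "0 < \<rho>" "\<rho> < 1"
    and gt: "\<gamma>t > 0"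
    and alpha: "\<alpha> \<ge> 1"
    and mu_def: "\<And>n. \<mu> n = 1 / (2 * \<eta>) * real n powr (- 1 / \<alpha>)"
    and Fn_def: "\<And>n. Fn n = (\<lambda>y. moreau_env (\<mu> n) g (S y))"
    and alg: "\<And>n. n \<ge> 1 \<Longrightarrow> \<exists>m::nat.
        \<gamma> n = \<rho> ^ m * \<gamma>t
      \<and> x (Suc n) \<in> proj C (x n - \<gamma> n *\<^sub>R grad (Fn n) (x n))
      \<and> Fn n (x (Suc n)) \<le> Fn n (x n)
            - c * \<gamma> n * (norm ((1 / \<gamma> n) *\<^sub>R (x n - x (Suc n))))\<^sup>2
      \<and> (\<forall>k<m. \<exists>y \<in> proj C (x n - (\<rho> ^ k * \<gamma>t) *\<^sub>R grad (Fn n) (x n)).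
            \<not> (Fn n y \<le> Fn n (x n)
                 - c * (\<rho> ^ k * \<gamma>t) * (norm ((1 / (\<rho> ^ k * \<gamma>t)) *\<^sub>R (x n - y)))\<^sup>2))"
begin

lemma alpha_pos: "\<alpha> > 0" using alpha by simp

lemma pw_le1: "n \<ge> 1 \<Longrightarrow> real n powr (- 1 / \<alpha>) \<le> 1"
  using powr_mono[of "- 1 / \<alpha>" 0 "real n"] alpha_pos by simp

lemma pw_ge: "n \<ge> 1 \<Longrightarrow> 1 / real n \<le> real n powr (- 1 / \<alpha>)"
proof -
  assume n: "n \<ge> 1"
  have "- 1 \<le> - 1 / \<alpha>" using alpha by (simp add: field_simps)
  then have "real n powr (- 1) \<le> real n powr (- 1 / \<alpha>)" using n by (intro powr_mono) auto
  then show ?thesis using n by (simp add: powr_neg_one)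
qed

lemma mu_pos: "n \<ge> 1 \<Longrightarrow> 0 < \<mu> n"
  unfolding mu_def using eta by simp

lemma mu_le: "n \<ge> 1 \<Longrightarrow> 2 * \<mu> n * \<eta> \<le> 1"
  unfolding mu_def using eta pw_le1 by simp

lemma mu_ok: "n \<ge> 1 \<Longrightarrow> 0 < \<mu> n \<and> 2 * \<mu> n * \<eta> \<le> 1" using mu_pos mu_le by blast

lemma mu_ge: "n \<ge> 1 \<Longrightarrow> 1 / (2 * \<eta> * real n) \<le> \<mu> n"
proof -
  assume n: "n \<ge> 1"
  have "1 / (2 * \<eta>) * (1 / real n) \<le> 1 / (2 * \<eta>) * real n powr (- 1 / \<alpha>)"
    using pw_ge[OF n] eta by (intro mult_left_mono) auto
  then show ?thesis unfolding mu_def by simp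
qed

lemma mu_mono: "n \<ge> 1 \<Longrightarrow> \<mu> (Suc n) \<le> \<mu> n"
proof -
  assume n: "n \<ge> 1"
  have "real (Suc n) powr (- 1 / \<alpha>) \<le> real n powr (- 1 / \<alpha>)"
    using n alpha_pos by (intro powr_mono2') (auto simp: field_simps)
  then show ?thesis unfolding mu_def using eta by (intro mult_left_mono) auto
qed

lemma mu_ratio: "n \<ge> 1 \<Longrightarrow> \<mu> n \<le> 2 * \<mu> (Suc n)"
proof -
  assume n: "n \<ge> 1"
  have a: "- 1 / \<alpha> \<le> 0" using alpha_pos by simp
  have "real (2 * n) powr (- 1 / \<alpha>) \<le> real (Suc n) powr (- 1 / \<alpha>)"
    using n by (intro powr_mono2'[OF a]) auto
  moreover have "real (2 * n) powr (- 1 / \<alpha>) = 2 powr (- 1 / \<alpha>) * real n powr (- 1 / \<alpha>)"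
    by (simp add: powr_mult)
  moreover have "1 / 2 \<le> (2::real) powr (- 1 / \<alpha>)"
  proof -
    have "- 1 \<le> - 1 / \<alpha>" using alpha by (simp add: field_simps)
    then have "(2::real) powr (- 1) \<le> 2 powr (- 1 / \<alpha>)" by (intro powr_mono) auto
    then show ?thesis by (simp add: powr_neg_one)
  qed
  ultimately have "1 / 2 * real n powr (- 1 / \<alpha>) \<le> real (Suc n) powr (- 1 / \<alpha>)"
    by (smt (verit) mult_right_mono powr_ge_zero)
  then show ?thesis unfolding mu_def using eta by (simp add: field_simps)
qed

lemma mu_lim: "\<mu> \<longlonglongrightarrow> 0"
proof -
  have "((\<lambda>n. real n powr (- 1 / \<alpha>)) \<longlongrightarrow> 0) sequentially"
    using alpha_pos by (intro tendsto_neg_powr filterlim_real_sequentially) simp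
  then have "((\<lambda>n. 1 / (2 * \<eta>) * real n powr (- 1 / \<alpha>)) \<longlongrightarrow> 1 / (2 * \<eta>) * 0) sequentially"
    by (intro tendsto_mult tendsto_const)
  then show ?thesis unfolding mu_def[abs_def] by simp
qed

lemma xC: "n \<ge> 1 \<Longrightarrow> x n \<in> C"
proof (induction n)
  case 0 then show ?case by simp
next
  case (Suc n)
  show ?case
  proof (cases "n = 0")
    case True then show ?thesis using x1 by simp
  next
    case False
    then have "n \<ge> 1" by simp
    then obtain m where "x (Suc n) \<in> proj C (x n - \<gamma> n *\<^sub>R grad (Fn n) (x n))" using alg by blast
    then show ?thesis by (rule proj_in)
  qed
qed

lemma gamma_bounds: "n \<ge> 1 \<Longrightarrow> 0 < \<gamma> n \<and> \<gamma> n \<le> \<gamma>t"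
proof -
  assume n: "n \<ge> 1"
  obtain m where "\<gamma> n = \<rho> ^ m * \<gamma>t" using alg[OF n] by blast
  moreover have "\<rho> ^ m \<le> 1" using rho by (simp add: power_le_one)
  moreover have "0 < \<rho> ^ m" using rho by simp
  ultimately show ?thesis using gt by (simp add: mult_le_cancel_right1)
qed

end

context algo begin

definition Kn :: "nat \<Rightarrow> real" where "Kn n = 4 * LS\<^sup>2 / \<mu> n + 2 * Lg * LD"
definition Lc :: real where "Lc = 8 * LS\<^sup>2 * \<eta> + 2 * Lg * LD + 1"
definition dd :: "nat \<Rightarrow> real" where "dd n = norm (x n - x (Suc n)) / \<gamma> n"

lemma Lc_pos: "Lc > 0" unfolding Lc_def using eta Lg_nonneg LD_nonneg
  by (simp add: add_nonneg_pos)

lemma Kn_nonneg: "n \<ge> 1 \<Longrightarrow> 0 \<le> Kn n"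
proof -
  assume n: "n \<ge> 1"
  have "0 < \<mu> n" using mu_pos[OF n] .
  then show ?thesis unfolding Kn_def using Lg_nonneg LD_nonneg
    by (intro add_nonneg_nonneg divide_nonneg_pos mult_nonneg_nonneg) auto
qed

lemma Kn_bound: "n \<ge> 1 \<Longrightarrow> Kn n \<le> Lc * real n"
proof -
  assume n: "n \<ge> 1"
  have m: "0 < \<mu> n" using mu_pos[OF n] .
  have "1 / (2 * \<eta> * real n) \<le> \<mu> n" by (rule mu_ge[OF n])
  then have "1 / \<mu> n \<le> 2 * \<eta> * real n" using m eta n by (simp add: field_simps)
  then have "4 * LS\<^sup>2 * (1 / \<mu> n) \<le> 4 * LS\<^sup>2 * (2 * \<eta> * real n)" by (intro mult_left_mono) auto
  then have a: "4 * LS\<^sup>2 / \<mu> n \<le> 8 * LS\<^sup>2 * \<eta> * real n" by simp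
  have b: "2 * Lg * LD * 1 \<le> 2 * Lg * LD * real n" using n Lg_nonneg LD_nonneg
    by (intro mult_left_mono) auto
  have "Kn n \<le> 8 * LS\<^sup>2 * \<eta> * real n + 2 * Lg * LD * real n" unfolding Kn_def using a b by linarith
  also have "\<dots> \<le> Lc * real n" unfolding Lc_def by (simp add: algebra_simps)
  finally show ?thesis .
qed

lemma descent: "n \<ge> 1 \<Longrightarrow> Fn n y \<le> Fn n z + grad (Fn n) z \<bullet> (y - z) + Kn n * (norm (y - z))\<^sup>2"
  using grad_quad[OF mu_pos mu_le, of n y z] unfolding Fn_def Kn_def by (simp add: abs_le_iff)

lemma test_ok:
  assumes n: "n \<ge> 1" and g': "0 < \<gamma>'" "\<gamma>' * Kn n \<le> 1 / 2 - c"
    and y: "y \<in> proj C (x n - \<gamma>' *\<^sub>R grad (Fn n) (x n))"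
  shows "Fn n y \<le> Fn n (x n) - c * \<gamma>' * (norm ((1 / \<gamma>') *\<^sub>R (x n - y)))\<^sup>2"
proof -
  define z where "z = x n"
  define G where "G = grad (Fn n) z"
  define N where "N = (norm (z - y))\<^sup>2"
  have zC: "z \<in> C" unfolding z_def using xC n by simp
  have "2 * (((z - \<gamma>' *\<^sub>R G) - y) \<bullet> (z - y)) \<le> N"
    using proj_ineq[OF y[folded z_def] zC] unfolding N_def G_def .
  then have "2 * N - 2 * \<gamma>' * (G \<bullet> (z - y)) \<le> N"
    unfolding N_def by (simp add: inner_diff_left power2_norm_eq_inner algebra_simps)
  then have P: "\<gamma>' * (G \<bullet> (y - z)) \<le> - N / 2"
    by (simp add: inner_diff_right algebra_simps)
  have D: "Fn n y \<le> Fn n z + G \<bullet> (y - z) + Kn n * N"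
    using descent[OF n, of y z] unfolding G_def N_def by (simp add: norm_minus_commute)
  have N0: "0 \<le> N" unfolding N_def by simp
  have "\<gamma>' * Fn n y \<le> \<gamma>' * (Fn n z + G \<bullet> (y - z) + Kn n * N)"
    using D g' by (simp add: mult_left_mono)
  also have "\<dots> = \<gamma>' * Fn n z + \<gamma>' * (G \<bullet> (y - z)) + (\<gamma>' * Kn n) * N" by (simp add: algebra_simps)
  also have "(\<gamma>' * Kn n) * N \<le> (1 / 2 - c) * N" using g'(2) N0 by (rule mult_right_mono)
  finally have "\<gamma>' * Fn n y \<le> \<gamma>' * Fn n z - c * N" using P by (simp add: algebra_simps)
  moreover have "\<gamma>' * (Fn n z - c * \<gamma>' * (N / \<gamma>'\<^sup>2)) = \<gamma>' * Fn n z - c * N"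
    using g' by (simp add: field_simps power2_eq_square)
  ultimately have "\<gamma>' * Fn n y \<le> \<gamma>' * (Fn n z - c * \<gamma>' * (N / \<gamma>'\<^sup>2))" by linarith
  then have "Fn n y \<le> Fn n z - c * \<gamma>' * (N / \<gamma>'\<^sup>2)" using g'(1) by (rule mult_left_le_imp_le)
  moreover have "(norm ((1 / \<gamma>') *\<^sub>R (z - y)))\<^sup>2 = N / \<gamma>'\<^sup>2"
    unfolding N_def using g' by (simp add: power_divide)
  ultimately show ?thesis unfolding z_def by simp
qed

definition \<kappa> :: real where "\<kappa> = min \<gamma>t (\<rho> * (1 / 2 - c) / Lc)"

lemma kappa_pos: "\<kappa> > 0" unfolding \<kappa>_def using gt rho c Lc_pos by simp

lemma gamma_lb: "n \<ge> 1 \<Longrightarrow> \<kappa> / real n \<le> \<gamma> n"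
proof -
  assume n: "n \<ge> 1"
  obtain m where m: "\<gamma> n = \<rho> ^ m * \<gamma>t"
    and fail: "\<forall>k<m. \<exists>y \<in> proj C (x n - (\<rho> ^ k * \<gamma>t) *\<^sub>R grad (Fn n) (x n)).
            \<not> (Fn n y \<le> Fn n (x n) - c * (\<rho> ^ k * \<gamma>t) * (norm ((1 / (\<rho> ^ k * \<gamma>t)) *\<^sub>R (x n - y)))\<^sup>2)"
    using alg[OF n] by blast
  have rn: "real n \<ge> 1" using n by simp
  show ?thesis
  proof (cases m)
    case 0
    then have "\<gamma> n = \<gamma>t" using m by simp
    moreover have "\<kappa> / real n \<le> \<kappa>" using kappa_pos rn by (simp add: divide_le_eq)
    moreover have "\<kappa> \<le> \<gamma>t" unfolding \<kappa>_def by simp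
    ultimately show ?thesis by linarith
  next
    case (Suc k)
    define g' where "g' = \<rho> ^ k * \<gamma>t"
    have g'pos: "0 < g'" unfolding g'_def using rho gt by simp
    obtain y where y: "y \<in> proj C (x n - g' *\<^sub>R grad (Fn n) (x n))"
      and ny: "\<not> (Fn n y \<le> Fn n (x n) - c * g' * (norm ((1 / g') *\<^sub>R (x n - y)))\<^sup>2)"
      using fail Suc unfolding g'_def by blast
    have "\<not> (g' * Kn n \<le> 1 / 2 - c)" using test_ok[OF n g'pos _ y] ny by blast
    then have A: "1 / 2 - c < g' * Kn n" by simp
    have "g' * Kn n \<le> g' * (Lc * real n)" using Kn_bound[OF n] g'pos by (simp add: mult_left_mono)
    then have "1 / 2 - c < g' * (Lc * real n)" using A by linarith
    then have "(1 / 2 - c) / (Lc * real n) < g'" using Lc_pos rn by (simp add: field_simps)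
    then have "\<rho> * ((1 / 2 - c) / (Lc * real n)) \<le> \<rho> * g'" using rho by (intro mult_left_mono) auto
    moreover have "\<gamma> n = \<rho> * g'" using m Suc unfolding g'_def by simp
    moreover have "\<kappa> / real n \<le> \<rho> * ((1 / 2 - c) / (Lc * real n))"
    proof -
      have "\<kappa> \<le> \<rho> * (1 / 2 - c) / Lc" unfolding \<kappa>_def by simp
      then have "\<kappa> / real n \<le> (\<rho> * (1 / 2 - c) / Lc) / real n" by (rule divide_right_mono) (use rn in simp)
      then show ?thesis by simp
    qed
    ultimately show ?thesis by linarith
  qed
qed

lemma stat_le: "n \<ge> 1 \<Longrightarrow> stat_measure (\<gamma> n) (Fn n) C (x n) \<le> dd n"
proof -
  assume n: "n \<ge> 1"
  have gp: "0 < \<gamma> n" using gamma_bounds[OF n] by simp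
  obtain m where xs: "x (Suc n) \<in> proj C (x n - \<gamma> n *\<^sub>R grad (Fn n) (x n))" using alg[OF n] by blast
  have v: "grad (Fn n) (x n) \<in> frechet_subdiff (\<lambda>y. ereal (Fn n y)) (x n)"
    using grad_subdiff[OF mu_pos[OF n] mu_le[OF n], of "x n"] unfolding Fn_def by simp
  have "(1 / \<gamma> n) *\<^sub>R (x n - x (Suc n)) \<in> {(1 / \<gamma> n) *\<^sub>R (x n - p) | p v. v \<in> frechet_subdiff (\<lambda>x. ereal (Fn n x)) (x n) \<and>
                                  p \<in> proj C (x n - \<gamma> n *\<^sub>R v)}"
    using v xs by blast
  then have "stat_measure (\<gamma> n) (Fn n) C (x n) \<le> dist 0 ((1 / \<gamma> n) *\<^sub>R (x n - x (Suc n)))"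
    unfolding stat_measure_def by (rule infdist_le)
  also have "\<dots> = dd n" unfolding dd_def using gp by (simp add: dist_norm)
  finally show ?thesis .
qed

lemma decrease: "n \<ge> 1 \<Longrightarrow> c * \<gamma> n * (dd n)\<^sup>2 \<le> Fn n (x n) - Fn n (x (Suc n))"
proof -
  assume n: "n \<ge> 1"
  have gp: "0 < \<gamma> n" using gamma_bounds[OF n] by simp
  obtain m where "Fn n (x (Suc n)) \<le> Fn n (x n) - c * \<gamma> n * (norm ((1 / \<gamma> n) *\<^sub>R (x n - x (Suc n))))\<^sup>2"
    using alg[OF n] by blast
  moreover have "norm ((1 / \<gamma> n) *\<^sub>R (x n - x (Suc n))) = dd n" unfolding dd_def using gp by simp
  ultimately show ?thesis by simp
qed

lemma Fn_next: "n \<ge> 1 \<Longrightarrow> Fn (Suc n) y \<le> Fn n y + 4 * Lg\<^sup>2 * (\<mu> n - \<mu> (Suc n))"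
proof -
  assume n: "n \<ge> 1"
  have m1: "0 < \<mu> (Suc n)" by (rule mu_pos) simp
  have "Fn (Suc n) y \<le> Fn n y + 2 * Lg\<^sup>2 * (\<mu> n / \<mu> (Suc n)) * (\<mu> n - \<mu> (Suc n))"
    unfolding Fn_def using env_mono[OF mu_pos[OF n] mu_le[OF n] m1 mu_mono[OF n]] by simp
  also have "2 * Lg\<^sup>2 * (\<mu> n / \<mu> (Suc n)) * (\<mu> n - \<mu> (Suc n)) \<le> 2 * Lg\<^sup>2 * 2 * (\<mu> n - \<mu> (Suc n))"
  proof -
    have "\<mu> n / \<mu> (Suc n) \<le> 2" using mu_ratio[OF n] m1 by (simp add: divide_le_eq)
    moreover have "0 \<le> \<mu> n - \<mu> (Suc n)" using mu_mono[OF n] by simp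
    ultimately show ?thesis by (intro mult_right_mono mult_left_mono) auto
  qed
  finally show ?thesis by simp
qed

end

context algo begin

definition y0 where "y0 = (SOME y. y \<in> C \<and> (\<forall>w\<in>C. g (S y) \<le> g (S w)))"

lemma y0: "y0 \<in> C" "\<And>w. w \<in> C \<Longrightarrow> g (S y0) \<le> g (S w)"
  using someI_ex[OF argmin_ne[unfolded Bex_def]] unfolding y0_def by auto

lemma Fn_lower: "n \<ge> 1 \<Longrightarrow> y \<in> C \<Longrightarrow> g (S y0) - Lg\<^sup>2 / \<eta> \<le> Fn n y"
proof -
  assume n: "n \<ge> 1" and y: "y \<in> C"
  have "g (S y) - 2 * \<mu> n * Lg\<^sup>2 \<le> Fn n y" unfolding Fn_def by (rule env_ge[OF mu_pos[OF n] mu_le[OF n]])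
  moreover have "2 * \<mu> n * Lg\<^sup>2 \<le> Lg\<^sup>2 / \<eta>"
  proof -
    have "2 * \<mu> n \<le> 1 / \<eta>" using mu_le[OF n] eta by (simp add: field_simps)
    then have "2 * \<mu> n * Lg\<^sup>2 \<le> 1 / \<eta> * Lg\<^sup>2" by (rule mult_right_mono) simp
    then show ?thesis by simp
  qed
  moreover have "g (S y0) \<le> g (S y)" using y0(2)[OF y] .
  ultimately show ?thesis by linarith
qed

definition tt :: "nat \<Rightarrow> real" where "tt n = \<gamma> (Suc n) * (dd (Suc n))\<^sup>2"

lemma tt_nonneg: "0 \<le> tt n" unfolding tt_def using gamma_bounds[of "Suc n"] by simp

lemma partial: "c * (\<Sum>n<N. tt n) \<le> Fn 1 (x 1) - Fn (Suc N) (x (Suc N)) + 4 * Lg\<^sup>2 * (\<mu> 1 - \<mu> (Suc N))"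
proof (induction N)
  case 0 then show ?case by simp
next
  case (Suc N)
  have n: "Suc N \<ge> 1" by simp
  have "c * tt N \<le> Fn (Suc N) (x (Suc N)) - Fn (Suc N) (x (Suc (Suc N)))"
    unfolding tt_def using decrease[OF n] by (simp add: algebra_simps)
  moreover have "Fn (Suc (Suc N)) (x (Suc (Suc N))) \<le> Fn (Suc N) (x (Suc (Suc N))) + 4 * Lg\<^sup>2 * (\<mu> (Suc N) - \<mu> (Suc (Suc N)))"
    by (rule Fn_next[OF n])
  ultimately show ?case using Suc.IH by (simp add: algebra_simps)
qed

definition B0 :: real where "B0 = Fn 1 (x 1) - (g (S y0) - Lg\<^sup>2 / \<eta>) + 4 * Lg\<^sup>2 * \<mu> 1"

lemma partial_bd: "(\<Sum>n<N. tt n) \<le> B0 / c"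
proof -
  have a: "g (S y0) - Lg\<^sup>2 / \<eta> \<le> Fn (Suc N) (x (Suc N))" by (rule Fn_lower) (auto intro: xC)
  have b: "0 \<le> 4 * Lg\<^sup>2 * \<mu> (Suc N)" using mu_pos[of "Suc N"] by simp
  have "c * (\<Sum>n<N. tt n) \<le> B0" using partial[of N] a b unfolding B0_def by (simp add: algebra_simps)
  then show ?thesis using c by (simp add: field_simps)
qed

lemma tt_summable: "summable tt"
  by (rule summableI_nonneg_bounded[OF tt_nonneg partial_bd])

lemma freq: "\<epsilon> > 0 \<Longrightarrow> \<exists>n\<ge>N. dd n < \<epsilon>"
proof (rule ccontr)
  assume e: "\<epsilon> > 0" and "\<not> (\<exists>n\<ge>N. dd n < \<epsilon>)"
  then have ge: "\<And>n. n \<ge> N \<Longrightarrow> \<epsilon> \<le> dd n" by (meson not_le)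
  have "summable (\<lambda>n. (\<kappa> * \<epsilon>\<^sup>2) * inverse (real (Suc n)))"
  proof (rule summable_comparison_test'[OF tt_summable])
    fix n assume n: "n \<ge> N"
    have "\<epsilon>\<^sup>2 \<le> (dd (Suc n))\<^sup>2" using ge[of "Suc n"] n e by (intro power_mono) auto
    moreover have "\<kappa> / real (Suc n) \<le> \<gamma> (Suc n)" by (rule gamma_lb) simp
    ultimately have "(\<kappa> / real (Suc n)) * \<epsilon>\<^sup>2 \<le> \<gamma> (Suc n) * (dd (Suc n))\<^sup>2"
      using kappa_pos gamma_bounds[of "Suc n"] by (intro mult_mono) auto
    then show "norm ((\<kappa> * \<epsilon>\<^sup>2) * inverse (real (Suc n))) \<le> tt n"
      unfolding tt_def using kappa_pos by (simp add: field_simps)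
  qed
  then have "summable (\<lambda>n. inverse (real (Suc n)))" using kappa_pos e by simp
  then have "summable (\<lambda>n. inverse (real n))" by (rule iffD1[OF summable_Suc_iff])
  then show False using not_summable_harmonic[where 'a=real] by simp
qed

lemma part_a: "liminf (\<lambda>n. ereal (stat_measure (\<gamma> n) (Fn n) C (x n))) = 0"
proof (rule antisym)
  show "0 \<le> liminf (\<lambda>n. ereal (stat_measure (\<gamma> n) (Fn n) C (x n)))"
    by (rule Liminf_bounded) (simp add: stat_measure_def infdist_nonneg)
  show "liminf (\<lambda>n. ereal (stat_measure (\<gamma> n) (Fn n) C (x n))) \<le> 0"
    unfolding liminf_SUP_INF
  proof (rule SUP_least)
    fix N :: nat
    show "(INF m\<in>{N..}. ereal (stat_measure (\<gamma> m) (Fn m) C (x m))) \<le> 0"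
    proof (rule ereal_le_epsilon2)
      fix e :: real assume e: "0 < e"
      obtain n where n: "n \<ge> max N 1" "dd n < e" using freq[OF e] by blast
      have "stat_measure (\<gamma> n) (Fn n) C (x n) \<le> dd n" by (rule stat_le) (use n in auto)
      then have le: "ereal (stat_measure (\<gamma> n) (Fn n) C (x n)) \<le> 0 + ereal e" using n by simp
      show "(INF m\<in>{N..}. ereal (stat_measure (\<gamma> m) (Fn m) C (x m))) \<le> 0 + ereal e"
        by (rule INF_lower2[of n _ "\<lambda>m. ereal (stat_measure (\<gamma> m) (Fn m) C (x m))", OF _ le]) (use n in auto)
    qed
  qed
qed

end

context algo begin

lemma grad_Fn_inner: "n \<ge> 1 \<Longrightarrow> grad (Fn n) z \<bullet> h = wg (\<mu> n) (S z) \<bullet> S' z h"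
  unfolding Fn_def by (rule grad_inner[OF mu_pos mu_le])

lemma grad_Fn_bound: "n \<ge> 1 \<Longrightarrow> norm (grad (Fn n) z) \<le> 2 * Lg * norm (S' z)"
  unfolding Fn_def by (rule grad_bound[OF mu_pos mu_le])

lemma S_isCont: "isCont S z"
  using lipschitz_on_continuous_on[OF S_lip] by (simp add: continuous_on_eq_continuous_at)

lemma S'_isCont: "isCont S' z"
  using lipschitz_on_continuous_on[OF DS_lip] by (simp add: continuous_on_eq_continuous_at)

lemma g_isCont: "isCont g z"
  using lipschitz_on_continuous_on[OF lip] by (simp add: continuous_on_eq_continuous_at)

lemma b_core:
  fixes nk :: "nat \<Rightarrow> nat" and P :: "nat \<Rightarrow> 'x" and w :: 'z and xs :: 'x
  assumes nk: "strict_mono nk" "\<And>k. nk k \<ge> 1"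
    and X: "(\<lambda>k. x (nk k)) \<longlonglongrightarrow> xs" and xsC: "xs \<in> C"
    and P: "\<And>k. P k \<in> proj C (x (nk k) - \<gamma> (nk k) *\<^sub>R grad (Fn (nk k)) (x (nk k)))"
    and A: "(\<lambda>k. (1 / \<gamma> (nk k)) *\<^sub>R (x (nk k) - P k)) \<longlonglongrightarrow> 0"
    and W: "(\<lambda>k. wg (\<mu> (nk k)) (S (x (nk k)))) \<longlonglongrightarrow> w"
  shows "0 \<in> frechet_subdiff (\<lambda>y. if y \<in> C then ereal (g (S y)) else \<infinity>) xs"
proof -
  define Xk where "Xk k = x (nk k)" for k
  define \<Gamma> where "\<Gamma> k = \<gamma> (nk k)" for k
  define G where "G k = grad (Fn (nk k)) (Xk k)" for k
  define Ak where "Ak k = (1 / \<Gamma> k) *\<^sub>R (Xk k - P k)" for k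
  define Wk where "Wk k = wg (\<mu> (nk k)) (S (Xk k))" for k
  define Q where "Q k = prox (\<mu> (nk k)) g (S (Xk k))" for k
  have X': "Xk \<longlonglongrightarrow> xs" using X unfolding Xk_def .
  have A': "Ak \<longlonglongrightarrow> 0" using A unfolding Ak_def \<Gamma>_def Xk_def .
  have W': "Wk \<longlonglongrightarrow> w" using W unfolding Wk_def Xk_def .
  have Gpos: "0 < \<Gamma> k" "\<Gamma> k \<le> \<gamma>t" for k unfolding \<Gamma>_def using gamma_bounds[OF nk(2)] by auto
  have XP: "Xk k - P k = \<Gamma> k *\<^sub>R Ak k" for k unfolding Ak_def using Gpos(1)[of k] by simp
  have Ginner: "G k \<bullet> h = Wk k \<bullet> S' (Xk k) h" for k h
    unfolding G_def Wk_def by (rule grad_Fn_inner[OF nk(2)])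
  have Gbound: "norm (G k) \<le> 2 * Lg * norm (S' (Xk k))" for k
    unfolding G_def by (rule grad_Fn_bound[OF nk(2)])
  have GA0: "(\<lambda>k. \<Gamma> k *\<^sub>R Ak k) \<longlonglongrightarrow> 0"
  proof (rule Lim_null_comparison)
    have "norm (\<Gamma> k *\<^sub>R Ak k) \<le> \<gamma>t * norm (Ak k)" for k
    proof -
      have "norm (\<Gamma> k *\<^sub>R Ak k) = \<Gamma> k * norm (Ak k)" using Gpos(1)[of k] by simp
      also have "\<dots> \<le> \<gamma>t * norm (Ak k)" using Gpos(2)[of k] by (rule mult_right_mono) simp
      finally show ?thesis .
    qed
    then show "\<forall>\<^sub>F k in sequentially. norm (\<Gamma> k *\<^sub>R Ak k) \<le> \<gamma>t * norm (Ak k)"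
      by (intro always_eventually allI)
    have "(\<lambda>k. \<gamma>t * norm (Ak k)) \<longlonglongrightarrow> \<gamma>t * norm (0::'x)"
      by (intro tendsto_intros A')
    then show "(\<lambda>k. \<gamma>t * norm (Ak k)) \<longlonglongrightarrow> 0" by simp
  qed
  have P': "P \<longlonglongrightarrow> xs"
  proof -
    have "(\<lambda>k. Xk k - \<Gamma> k *\<^sub>R Ak k) \<longlonglongrightarrow> xs - 0" by (intro tendsto_intros X' GA0)
    moreover have "P = (\<lambda>k. Xk k - \<Gamma> k *\<^sub>R Ak k)"
    proof (rule ext)
      fix k show "P k = Xk k - \<Gamma> k *\<^sub>R Ak k" using XP[of k] by (simp add: algebra_simps)
    qed
    ultimately show ?thesis by simp
  qed
  have M0: "(\<lambda>k. \<mu> (nk k)) \<longlonglongrightarrow> 0" using LIMSEQ_subseq_LIMSEQ[OF mu_lim nk(1)] by (simp add: o_def)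
  have SX: "(\<lambda>k. S (Xk k)) \<longlonglongrightarrow> S xs" by (rule isCont_tendsto_compose[OF S_isCont X'])
  have S'X: "(\<lambda>k. S' (Xk k)) \<longlonglongrightarrow> S' xs" by (rule isCont_tendsto_compose[OF S'_isCont X'])
  have Q': "Q \<longlonglongrightarrow> S xs"
  proof -
    have "(\<lambda>k. Q k - S (Xk k)) \<longlonglongrightarrow> 0"
    proof (rule Lim_null_comparison)
      show "\<forall>\<^sub>F k in sequentially. norm (Q k - S (Xk k)) \<le> 2 * \<mu> (nk k) * Lg"
        unfolding Q_def using prox_dist[OF mu_pos[OF nk(2)] mu_le[OF nk(2)]] by (intro always_eventually allI) auto
      have "(\<lambda>k. 2 * \<mu> (nk k) * Lg) \<longlonglongrightarrow> 2 * 0 * Lg" by (intro tendsto_intros M0)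
      then show "(\<lambda>k. 2 * \<mu> (nk k) * Lg) \<longlonglongrightarrow> 0" by simp
    qed
    from tendsto_add[OF this SX] show ?thesis by simp
  qed
  have wb: "norm w \<le> 2 * Lg"
  proof (rule LIMSEQ_le[OF tendsto_norm[OF W'] tendsto_const])
    show "\<exists>N. \<forall>k\<ge>N. norm (Wk k) \<le> 2 * Lg"
      unfolding Wk_def by (rule exI[of _ 0], intro allI impI, rule wg_bound[OF mu_pos[OF nk(2)] mu_le[OF nk(2)]])
  qed
  have SG: "g (S xs) + w \<bullet> (u - S xs) - \<eta> * (norm (u - S xs))\<^sup>2 \<le> g u" for u
  proof (rule LIMSEQ_le[OF _ tendsto_const])
    show "(\<lambda>k. g (Q k) + Wk k \<bullet> (u - Q k) - \<eta> * (norm (u - Q k))\<^sup>2) \<longlonglongrightarrow> g (S xs) + w \<bullet> (u - S xs) - \<eta> * (norm (u - S xs))\<^sup>2"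
      by (intro tendsto_intros isCont_tendsto_compose[OF g_isCont Q'] W' Q')
    show "\<exists>N. \<forall>k\<ge>N. g (Q k) + Wk k \<bullet> (u - Q k) - \<eta> * (norm (u - Q k))\<^sup>2 \<le> g u"
      unfolding Q_def Wk_def by (rule exI[of _ 0], intro allI impI, rule subgrad[OF mu_pos[OF nk(2)] mu_le[OF nk(2)]])
  qed
  obtain R where R: "R > 0" and NI: "\<And>p v. p \<in> C \<Longrightarrow> norm (p - xs) < R \<Longrightarrow> p \<in> proj C (p + v) \<Longrightarrow>
           (\<forall>y\<in>C. (v \<bullet> (y - p)) * (2 * R) \<le> norm v * (norm (y - p))\<^sup>2)"
    using normal_ineq[OF C_closed C_ne C_pr xsC] by blast
  obtain N0 where N0: "\<forall>k\<ge>N0. norm (P k - xs) < R" using LIMSEQ_D[OF P' R] by (elim exE) (rule that)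
  have NC: "- (w \<bullet> S' xs (y - xs)) * (2 * R) \<le> 2 * Lg * norm (S' xs) * (norm (y - xs))\<^sup>2" if yC: "y \<in> C" for y
  proof -
    have "(\<lambda>k. (Ak k \<bullet> (y - P k) - Wk k \<bullet> S' (Xk k) (y - P k)) * (2 * R)) \<longlonglongrightarrow> (0 \<bullet> (y - xs) - w \<bullet> S' xs (y - xs)) * (2 * R)"
      by (intro tendsto_intros A' P' W' S'X)
    then have L: "(\<lambda>k. (Ak k \<bullet> (y - P k) - Wk k \<bullet> S' (Xk k) (y - P k)) * (2 * R)) \<longlonglongrightarrow> - (w \<bullet> S' xs (y - xs)) * (2 * R)"
      by simp
    have "(\<lambda>k. (norm (Ak k) + 2 * Lg * norm (S' (Xk k))) * (norm (y - P k))\<^sup>2) \<longlonglongrightarrow> (norm (0::'x) + 2 * Lg * norm (S' xs)) * (norm (y - xs))\<^sup>2"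
      by (intro tendsto_intros A' P' S'X)
    then have Rt: "(\<lambda>k. (norm (Ak k) + 2 * Lg * norm (S' (Xk k))) * (norm (y - P k))\<^sup>2) \<longlonglongrightarrow> 2 * Lg * norm (S' xs) * (norm (y - xs))\<^sup>2"
      by simp
    show ?thesis
    proof (rule LIMSEQ_le[OF L Rt], rule exI[of _ N0], intro allI impI)
      fix k assume k: "k \<ge> N0"
      have PC: "P k \<in> C" using P[of k] unfolding Xk_def by (rule proj_in)
      define \<zeta> where "\<zeta> = Ak k - G k"
      have pv: "P k \<in> proj C (P k + \<Gamma> k *\<^sub>R \<zeta>)"
      proof -
        have "P k + \<Gamma> k *\<^sub>R \<zeta> = Xk k - \<Gamma> k *\<^sub>R G k"
          unfolding \<zeta>_def using XP[of k] by (simp add: algebra_simps)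
        then show ?thesis using P[of k] unfolding Xk_def G_def \<Gamma>_def by simp
      qed
      have "((\<Gamma> k *\<^sub>R \<zeta>) \<bullet> (y - P k)) * (2 * R) \<le> norm (\<Gamma> k *\<^sub>R \<zeta>) * (norm (y - P k))\<^sup>2"
        using NI[OF PC _ pv] N0 k yC by simp
      then have "\<Gamma> k * ((\<zeta> \<bullet> (y - P k)) * (2 * R)) \<le> \<Gamma> k * (norm \<zeta> * (norm (y - P k))\<^sup>2)"
        using Gpos[of k] by (simp add: algebra_simps)
      then have "(\<zeta> \<bullet> (y - P k)) * (2 * R) \<le> norm \<zeta> * (norm (y - P k))\<^sup>2"
        using Gpos(1)[of k] by (rule mult_left_le_imp_le)
      also have "\<dots> \<le> (norm (Ak k) + 2 * Lg * norm (S' (Xk k))) * (norm (y - P k))\<^sup>2"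
      proof (rule mult_right_mono)
        have "norm \<zeta> \<le> norm (Ak k) + norm (G k)" unfolding \<zeta>_def by (rule norm_triangle_ineq4)
        then show "norm \<zeta> \<le> norm (Ak k) + 2 * Lg * norm (S' (Xk k))" using Gbound[of k] by linarith
      qed simp
      finally show "(Ak k \<bullet> (y - P k) - Wk k \<bullet> S' (Xk k) (y - P k)) * (2 * R) \<le> (norm (Ak k) + 2 * Lg * norm (S' (Xk k))) * (norm (y - P k))\<^sup>2"
        unfolding \<zeta>_def by (simp add: inner_diff_left Ginner)
    qed
  qed
  define K where "K = Lg * norm (S' xs) / R + 2 * Lg * LD + \<eta> * LS\<^sup>2"
  have K0: "0 \<le> K" unfolding K_def using Lg_nonneg LD_nonneg eta R by simp
  show ?thesis
  proof (rule subdiff_quad[of "\<lambda>y. if y \<in> C then ereal (g (S y)) else \<infinity>" xs "g (S xs)" K 0])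
    show "(if xs \<in> C then ereal (g (S xs)) else \<infinity>) = ereal (g (S xs))" using xsC by simp
    show "0 \<le> K" by (rule K0)
    fix y
    show "ereal (g (S xs) + 0 \<bullet> (y - xs) - K * (norm (y - xs))\<^sup>2) \<le> (if y \<in> C then ereal (g (S y)) else \<infinity>)"
    proof (cases "y \<in> C")
      case False then show ?thesis by simp
    next
      case True
      define N where "N = (norm (y - xs))\<^sup>2"
      define Rm where "Rm = S y - S xs - S' xs (y - xs)"
      have N0': "0 \<le> N" unfolding N_def by simp
      have Rm: "norm Rm \<le> LD * N" unfolding Rm_def N_def by (rule S_rem)
      have a: "g (S xs) + w \<bullet> (S y - S xs) - \<eta> * (norm (S y - S xs))\<^sup>2 \<le> g (S y)" by (rule SG)
      have b: "w \<bullet> (S y - S xs) = w \<bullet> S' xs (y - xs) + w \<bullet> Rm" unfolding Rm_def by (simp add: inner_diff_right)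
      have c1: "- (w \<bullet> Rm) \<le> 2 * Lg * LD * N"
      proof -
        have "- (w \<bullet> Rm) \<le> norm w * norm Rm" using Cauchy_Schwarz_ineq2[of w Rm] by (simp add: abs_le_iff)
        also have "\<dots> \<le> (2 * Lg) * (LD * N)" using wb Rm Lg_nonneg by (intro mult_mono) auto
        finally show ?thesis by simp
      qed
      have c2: "- (w \<bullet> S' xs (y - xs)) \<le> Lg * norm (S' xs) / R * N"
      proof -
        have "- (w \<bullet> S' xs (y - xs)) * (2 * R) \<le> 2 * Lg * norm (S' xs) * N" using NC[OF True] unfolding N_def .
        moreover have R2: "0 < 2 * R" using R by simp
        ultimately have "- (w \<bullet> S' xs (y - xs)) \<le> (2 * Lg * norm (S' xs) * N) / (2 * R)"
          by (intro mult_imp_le_div_pos)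
        also have "(2 * Lg * norm (S' xs) * N) / (2 * R) = Lg * norm (S' xs) / R * N" by simp
        finally show ?thesis .
      qed
      have c3: "\<eta> * (norm (S y - S xs))\<^sup>2 \<le> \<eta> * LS\<^sup>2 * N"
      proof -
        have "(norm (S y - S xs))\<^sup>2 \<le> (LS * norm (y - xs))\<^sup>2" using S_lipD[of y xs] by (simp add: power_mono)
        then have "\<eta> * (norm (S y - S xs))\<^sup>2 \<le> \<eta> * (LS * norm (y - xs))\<^sup>2" by (rule mult_left_mono) (use eta in auto)
        then show ?thesis unfolding N_def by (simp add: power_mult_distrib)
      qed
      have "K * N = Lg * norm (S' xs) / R * N + 2 * Lg * LD * N + \<eta> * LS\<^sup>2 * N" unfolding K_def by (simp add: algebra_simps)
      then have "g (S xs) - K * N \<le> g (S y)" using a b c1 c2 c3 by linarith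
      then show ?thesis using True unfolding N_def by simp
    qed
  qed
qed

end

context algo begin

lemma choose_p:
  assumes n: "n \<ge> 1" and t: "stat_measure (\<gamma> n) (Fn n) C (x n) < t"
  shows "\<exists>p. p \<in> proj C (x n - \<gamma> n *\<^sub>R grad (Fn n) (x n)) \<and> norm ((1 / \<gamma> n) *\<^sub>R (x n - p)) < t"
proof -
  define A where "A = {(1 / \<gamma> n) *\<^sub>R (x n - p) | p v. v \<in> frechet_subdiff (\<lambda>x. ereal (Fn n x)) (x n) \<and>
                                  p \<in> proj C (x n - \<gamma> n *\<^sub>R v)}"
  have sd: "frechet_subdiff (\<lambda>x. ereal (Fn n x)) (x n) = {grad (Fn n) (x n)}"
    using grad_subdiff[OF mu_pos[OF n] mu_le[OF n], of "x n"] unfolding Fn_def by simp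
  obtain m where xs: "x (Suc n) \<in> proj C (x n - \<gamma> n *\<^sub>R grad (Fn n) (x n))" using alg[OF n] by blast
  have "(1 / \<gamma> n) *\<^sub>R (x n - x (Suc n)) \<in> A" unfolding A_def sd using xs by blast
  then have Ane: "A \<noteq> {}" by blast
  have "Inf ((\<lambda>a. dist 0 a) ` A) < t" using t unfolding stat_measure_def A_def[symmetric] infdist_notempty[OF Ane] .
  then obtain d where "d \<in> (\<lambda>a. dist 0 a) ` A" "d < t" using cInf_lessD[of "(\<lambda>a. dist 0 a) ` A" t] Ane by blast
  then obtain a where a: "a \<in> A" "dist 0 a < t" by blast
  then obtain p where "a = (1 / \<gamma> n) *\<^sub>R (x n - p)" "p \<in> proj C (x n - \<gamma> n *\<^sub>R grad (Fn n) (x n))"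
    unfolding A_def sd by blast
  then show ?thesis using a(2) by (auto simp: dist_norm)
qed

lemma part_b:
  fixes m r :: "nat \<Rightarrow> nat" and xs :: 'x
  assumes m: "strict_mono m" and lim: "(\<lambda>l. stat_measure (\<gamma> (m l)) (Fn (m l)) C (x (m l))) \<longlonglongrightarrow> 0"
    and xsC: "xs \<in> C" and r: "strict_mono r" and rl: "(x \<circ> m \<circ> r) \<longlonglongrightarrow> xs"
  shows "0 \<in> frechet_subdiff (\<lambda>y. if y \<in> C then ereal (g (S y)) else \<infinity>) xs"
proof -
  define \<sigma> where "\<sigma> j = m (r (Suc j))" for j
  have \<sigma>mono: "strict_mono \<sigma>"
    unfolding strict_mono_def \<sigma>_def using strict_monoD[OF m] strict_monoD[OF r] by simp
  have \<sigma>1: "\<sigma> j \<ge> 1" for j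
  proof -
    have "Suc j \<le> r (Suc j)" by (rule seq_suble[OF r])
    also have "r (Suc j) \<le> m (r (Suc j))" by (rule seq_suble[OF m])
    finally show ?thesis unfolding \<sigma>_def by simp
  qed
  have X\<sigma>: "(\<lambda>j. x (\<sigma> j)) \<longlonglongrightarrow> xs"
    using LIMSEQ_Suc[OF rl] unfolding \<sigma>_def by (simp add: o_def)
  define st where "st j = stat_measure (\<gamma> (\<sigma> j)) (Fn (\<sigma> j)) C (x (\<sigma> j))" for j
  have st: "st \<longlonglongrightarrow> 0"
    using LIMSEQ_Suc[OF LIMSEQ_subseq_LIMSEQ[OF lim r]] unfolding st_def \<sigma>_def by (simp add: o_def)
  have "\<forall>j. \<exists>p. p \<in> proj C (x (\<sigma> j) - \<gamma> (\<sigma> j) *\<^sub>R grad (Fn (\<sigma> j)) (x (\<sigma> j))) \<and>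
      norm ((1 / \<gamma> (\<sigma> j)) *\<^sub>R (x (\<sigma> j) - p)) < st j + inverse (real (Suc j))"
  proof
    fix j
    have "stat_measure (\<gamma> (\<sigma> j)) (Fn (\<sigma> j)) C (x (\<sigma> j)) < st j + inverse (real (Suc j))"
      unfolding st_def by simp
    then show "\<exists>p. p \<in> proj C (x (\<sigma> j) - \<gamma> (\<sigma> j) *\<^sub>R grad (Fn (\<sigma> j)) (x (\<sigma> j))) \<and>
      norm ((1 / \<gamma> (\<sigma> j)) *\<^sub>R (x (\<sigma> j) - p)) < st j + inverse (real (Suc j))"
      by (rule choose_p[OF \<sigma>1])
  qed
  then obtain p where p: "\<And>j. p j \<in> proj C (x (\<sigma> j) - \<gamma> (\<sigma> j) *\<^sub>R grad (Fn (\<sigma> j)) (x (\<sigma> j)))"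
      and pn: "\<And>j. norm ((1 / \<gamma> (\<sigma> j)) *\<^sub>R (x (\<sigma> j) - p j)) < st j + inverse (real (Suc j))"
    by metis
  define a where "a j = (1 / \<gamma> (\<sigma> j)) *\<^sub>R (x (\<sigma> j) - p j)" for j
  have a0: "a \<longlonglongrightarrow> 0"
  proof (rule Lim_null_comparison)
    show "\<forall>\<^sub>F j in sequentially. norm (a j) \<le> st j + inverse (real (Suc j))"
      using pn unfolding a_def by (intro always_eventually allI) (simp add: less_imp_le)
    have "(\<lambda>j. st j + inverse (real (Suc j))) \<longlonglongrightarrow> 0 + 0"
      by (intro tendsto_add st LIMSEQ_inverse_real_of_nat)
    then show "(\<lambda>j. st j + inverse (real (Suc j))) \<longlonglongrightarrow> 0" by simp
  qed
  define W where "W j = wg (\<mu> (\<sigma> j)) (S (x (\<sigma> j)))" for j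
  have "bounded (range W)"
    unfolding bounded_iff W_def using wg_bound[OF mu_pos[OF \<sigma>1] mu_le[OF \<sigma>1]] by blast
  then obtain l \<psi> where \<psi>: "strict_mono \<psi>" and Wl: "(W \<circ> \<psi>) \<longlonglongrightarrow> l"
    using bounded_imp_convergent_subsequence by blast
  show ?thesis
  proof (rule b_core[of "\<sigma> \<circ> \<psi>" xs "p \<circ> \<psi>" l])
    show "strict_mono (\<sigma> \<circ> \<psi>)" by (rule strict_mono_o[OF \<sigma>mono \<psi>])
    show "1 \<le> (\<sigma> \<circ> \<psi>) k" for k using \<sigma>1 by simp
    show "(\<lambda>k. x ((\<sigma> \<circ> \<psi>) k)) \<longlonglongrightarrow> xs" using LIMSEQ_subseq_LIMSEQ[OF X\<sigma> \<psi>] by (simp add: o_def)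
    show "xs \<in> C" by (rule xsC)
    show "(p \<circ> \<psi>) k \<in> proj C (x ((\<sigma> \<circ> \<psi>) k) - \<gamma> ((\<sigma> \<circ> \<psi>) k) *\<^sub>R grad (Fn ((\<sigma> \<circ> \<psi>) k)) (x ((\<sigma> \<circ> \<psi>) k)))" for k
      using p by simp
    show "(\<lambda>k. (1 / \<gamma> ((\<sigma> \<circ> \<psi>) k)) *\<^sub>R (x ((\<sigma> \<circ> \<psi>) k) - (p \<circ> \<psi>) k)) \<longlonglongrightarrow> 0"
      using LIMSEQ_subseq_LIMSEQ[OF a0 \<psi>] unfolding a_def by (simp add: o_def)
    show "(\<lambda>k. wg (\<mu> ((\<sigma> \<circ> \<psi>) k)) (S (x ((\<sigma> \<circ> \<psi>) k)))) \<longlonglongrightarrow> l"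
      using Wl unfolding W_def by (simp add: o_def)
  qed
qed

end

theorem theorem2:
  fixes S :: "'x::euclidean_space \<Rightarrow> 'z::euclidean_space"
    and S' :: "'x \<Rightarrow> 'x \<Rightarrow>\<^sub>L 'z"
    and g :: "'z \<Rightarrow> real"
    and C :: "'x set"
    and \<eta> c \<rho> \<gamma>t \<alpha> :: real
    and x :: "nat \<Rightarrow> 'x"
    and \<gamma> :: "nat \<Rightarrow> real"
    and \<mu> :: "nat \<Rightarrow> real"
    and Fn :: "nat \<Rightarrow> 'x \<Rightarrow> real"
  assumes S_deriv: "\<And>y. (S has_derivative blinfun_apply (S' y)) (at y)"
    and S_lip: "\<exists>L. L-lipschitz_on UNIV S"
    and DS_lip: "\<exists>L. L-lipschitz_on UNIV S'"
    and g_lip: "\<exists>L. L-lipschitz_on UNIV g"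
    and eta_pos: "\<eta> > 0"
    and g_wc: "weakly_convex \<eta> g"
    and C_ne: "C \<noteq> {}" and C_closed: "closed C" and C_pr: "prox_regular C"
    and argmin_ne: "\<exists>y\<in>C. \<forall>w\<in>C. g (S y) \<le> g (S w)"
    and x1: "x 1 \<in> C"
    and c: "0 < c" "c < 1 / 2"
    and rho: "0 < \<rho>" "\<rho> < 1"
    and gt: "\<gamma>t > 0"
    and alpha: "\<alpha> \<ge> 1"
    and mu_def: "\<And>n. \<mu> n = 1 / (2 * \<eta>) * real n powr (- 1 / \<alpha>)"
    and Fn_def: "\<And>n. Fn n = (\<lambda>y. moreau_env (\<mu> n) g (S y))"
    and alg: "\<And>n. n \<ge> 1 \<Longrightarrow> \<exists>m::nat.
        \<gamma> n = \<rho> ^ m * \<gamma>t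
      \<and> x (Suc n) \<in> proj C (x n - \<gamma> n *\<^sub>R grad (Fn n) (x n))
      \<and> Fn n (x (Suc n)) \<le> Fn n (x n)
            - c * \<gamma> n * (norm ((1 / \<gamma> n) *\<^sub>R (x n - x (Suc n))))\<^sup>2
      \<and> (\<forall>k<m. \<exists>y \<in> proj C (x n - (\<rho> ^ k * \<gamma>t) *\<^sub>R grad (Fn n) (x n)).
            \<not> (Fn n y \<le> Fn n (x n)
                 - c * (\<rho> ^ k * \<gamma>t) * (norm ((1 / (\<rho> ^ k * \<gamma>t)) *\<^sub>R (x n - y)))\<^sup>2))"
  shows "liminf (\<lambda>n. ereal (stat_measure (\<gamma> n) (Fn n) C (x n))) = 0
         \<and> (\<forall>m xs. strict_mono m \<longrightarrow>
           (\<lambda>l. stat_measure (\<gamma> (m l)) (Fn (m l)) C (x (m l))) \<longlonglongrightarrow> 0 \<longrightarrow>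
           xs \<in> C \<longrightarrow> (\<exists>r. strict_mono r \<and> (x \<circ> m \<circ> r) \<longlonglongrightarrow> xs) \<longrightarrow>
           0 \<in> frechet_subdiff (\<lambda>y. if y \<in> C then ereal (g (S y)) else \<infinity>) xs)"
proof -
  obtain LS where LS: "LS-lipschitz_on UNIV S" using S_lip by blast
  obtain LD where LD: "LD-lipschitz_on UNIV S'" using DS_lip by blast
  obtain Lg where Lg: "Lg-lipschitz_on UNIV g" using g_lip by blast
  interpret A: algo g \<eta> Lg S S' LS LD C c \<rho> \<gamma>t \<alpha> x \<gamma> \<mu> Fn
  proof (unfold_locales)
    show "\<exists>m::nat. \<gamma> n = \<rho> ^ m * \<gamma>t
      \<and> x (Suc n) \<in> proj C (x n - \<gamma> n *\<^sub>R grad (Fn n) (x n))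
      \<and> Fn n (x (Suc n)) \<le> Fn n (x n)
            - c * \<gamma> n * (norm ((1 / \<gamma> n) *\<^sub>R (x n - x (Suc n))))\<^sup>2
      \<and> (\<forall>k<m. \<exists>y \<in> proj C (x n - (\<rho> ^ k * \<gamma>t) *\<^sub>R grad (Fn n) (x n)).
            \<not> (Fn n y \<le> Fn n (x n)
                 - c * (\<rho> ^ k * \<gamma>t) * (norm ((1 / (\<rho> ^ k * \<gamma>t)) *\<^sub>R (x n - y)))\<^sup>2))" if "n \<ge> 1" for n
      by (rule alg[OF that])
  qed (use S_deriv LS LD Lg eta_pos g_wc C_ne C_closed C_pr argmin_ne x1 c rho gt alpha mu_def Fn_def in auto)
  show ?thesis
  proof (intro conjI allI impI)
    show "liminf (\<lambda>n. ereal (stat_measure (\<gamma> n) (Fn n) C (x n))) = 0" by (rule A.part_a)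
    fix m xs
    assume m: "strict_mono (m::nat \<Rightarrow> nat)" and lim: "(\<lambda>l. stat_measure (\<gamma> (m l)) (Fn (m l)) C (x (m l))) \<longlonglongrightarrow> 0"
      and xsC: "xs \<in> C" and ex: "\<exists>r. strict_mono r \<and> (x \<circ> m \<circ> r) \<longlonglongrightarrow> xs"
    then obtain r where r: "strict_mono r" "(x \<circ> m \<circ> r) \<longlonglongrightarrow> xs" by blast
    show "0 \<in> frechet_subdiff (\<lambda>y. if y \<in> C then ereal (g (S y)) else \<infinity>) xs"
      by (rule A.part_b[OF m lim xsC r])
  qed
qed

end
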